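(* For every $m \ge 1$, the quotient $TW_{m+2}'/TW_{m+2}''$ is isomorphic to the free abelian group $\mathbb Z^{2m-1}$. In particular, $TW_{m+2}'$ is not perfect for any $m \ge 1$.
   Context: For $n \ge 2$, the twin group $TW_n$ is the group with generators $\tau_1,\dots,\tau_{n-1}$ and defining relations $\tau_i^2=1$ for all $i$, and $\tau_i\tau_j=\tau_j\tau_i$ whenever $|i-j|>1$. $G'$ denotes the commutator subgroup of a group $G$ and $G''=(G')'$. *)

theory Defs
  imports "HOL-Algebra.Algebra"
begin

text \<open>The twin group TW_n, given by its presentation: generators tau_1, ..., tau_(n-1),
  relations tau_i^2 = 1 and tau_i tau_j = tau_j tau_i for |i - j| > 1.
  Elements are equivalence classes of words (lists of generator indices in {1..n-1})
  modulo the congruence generated by the defining relations.\<close>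

definition tw_words :: "nat \<Rightarrow> nat list set" where
  "tw_words n = {w. set w \<subseteq> {1..<n}}"

definition tw_step :: "nat \<Rightarrow> (nat list \<times> nat list) set" where
  "tw_step n =
     {(u @ [i, i] @ v, u @ v) | u v i. i \<in> {1..<n} \<and> u \<in> tw_words n \<and> v \<in> tw_words n}
   \<union> {(u @ [i, j] @ v, u @ [j, i] @ v) | u v i j.
        i \<in> {1..<n} \<and> j \<in> {1..<n} \<and> (i + 1 < j \<or> j + 1 < i)
        \<and> u \<in> tw_words n \<and> v \<in> tw_words n}"

definition tw_rel :: "nat \<Rightarrow> (nat list \<times> nat list) set" where
  "tw_rel n = (tw_step n \<union> (tw_step n)\<inverse>)\<^sup>* \<inter> (tw_words n \<times> tw_words n)"

definition twin_group :: "nat \<Rightarrow> nat list set monoid" where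
  "twin_group n =
     \<lparr>carrier = tw_words n // tw_rel n,
      monoid.mult = (\<lambda>A B. \<Union>a\<in>A. \<Union>b\<in>B. tw_rel n `` {a @ b}),
      one = tw_rel n `` {[]}\<rparr>"

text \<open>Commutator subgroup G' = derived G (carrier G); G'' = derived G G'.\<close>

end

theory Submission
  imports Defs
begin

lemma tw_words_iff: "w \<in> tw_words n \<longleftrightarrow> set w \<subseteq> {1..<n}"
  by (simp add: tw_words_def)

lemma tw_step_words: "(x, y) \<in> tw_step n \<Longrightarrow> x \<in> tw_words n \<and> y \<in> tw_words n"
  unfolding tw_step_def tw_words_def by (auto simp: subset_iff)

lemma tw_step_append:
  assumes "(x, y) \<in> tw_step n" "z \<in> tw_words n"
  shows "(x @ z, y @ z) \<in> tw_step n \<and> (z @ x, z @ y) \<in> tw_step n"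
proof -
  { fix u v i assume c: "x = u @ [i, i] @ v" "y = u @ v" "i \<in> {1..<n}"
      "u \<in> tw_words n" "v \<in> tw_words n"
    have "(x @ z, y @ z) \<in> tw_step n"
      unfolding tw_step_def using c assms(2)
      by (intro UnI1 CollectI exI[of _ u] exI[of _ "v @ z"] exI[of _ i]) (auto simp: tw_words_def)
    moreover have "(z @ x, z @ y) \<in> tw_step n"
      unfolding tw_step_def using c assms(2)
      by (intro UnI1 CollectI exI[of _ "z @ u"] exI[of _ v] exI[of _ i]) (auto simp: tw_words_def)
    ultimately have ?thesis by blast }
  moreover
  { fix u v i j assume s: "x = u @ [i, j] @ v" "y = u @ [j, i] @ v" "i \<in> {1..<n}" "j \<in> {1..<n}"
      "i + 1 < j \<or> j + 1 < i" "u \<in> tw_words n" "v \<in> tw_words n"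
    have "(x @ z, y @ z) \<in> tw_step n"
      unfolding tw_step_def using s assms(2)
      by (intro UnI2 CollectI exI[of _ u] exI[of _ "v @ z"] exI[of _ i] exI[of _ j]) (auto simp: tw_words_def)
    moreover have "(z @ x, z @ y) \<in> tw_step n"
      unfolding tw_step_def using s assms(2)
      by (intro UnI2 CollectI exI[of _ "z @ u"] exI[of _ v] exI[of _ i] exI[of _ j]) (auto simp: tw_words_def)
    ultimately have ?thesis by blast }
  ultimately show ?thesis using assms(1) unfolding tw_step_def by blast
qed

abbreviation "tw_sym n \<equiv> tw_step n \<union> (tw_step n)\<inverse>"

lemma tw_sym_append1:
  assumes "(x, y) \<in> (tw_sym n)\<^sup>*" "z \<in> tw_words n"
  shows "(x @ z, y @ z) \<in> (tw_sym n)\<^sup>*"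
  using assms(1)
proof (induction rule: rtrancl_induct)
  case (step y w)
  then show ?case using tw_step_append[OF _ assms(2)]
    by (meson UnE UnI1 UnI2 converse_iff rtrancl.rtrancl_into_rtrancl)
qed auto

lemma tw_sym_append2:
  assumes "(x, y) \<in> (tw_sym n)\<^sup>*" "z \<in> tw_words n"
  shows "(z @ x, z @ y) \<in> (tw_sym n)\<^sup>*"
  using assms(1)
proof (induction rule: rtrancl_induct)
  case (step y w)
  then show ?case using tw_step_append[OF _ assms(2)]
    by (meson UnE UnI1 UnI2 converse_iff rtrancl.rtrancl_into_rtrancl)
qed auto

lemma tw_rel_iff: "(x, y) \<in> tw_rel n \<longleftrightarrow> (x, y) \<in> (tw_sym n)\<^sup>* \<and> x \<in> tw_words n \<and> y \<in> tw_words n"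
  by (auto simp: tw_rel_def)

lemma words_append[simp]: "a @ b \<in> tw_words n \<longleftrightarrow> a \<in> tw_words n \<and> b \<in> tw_words n"
  by (auto simp: tw_words_def)

lemma words_rev[simp]: "rev a \<in> tw_words n \<longleftrightarrow> a \<in> tw_words n"
  by (auto simp: tw_words_def)

lemma words_Cons[simp]: "i # a \<in> tw_words n \<longleftrightarrow> i \<in> {1..<n} \<and> a \<in> tw_words n"
  by (auto simp: tw_words_def)

lemma words_Nil[simp]: "[] \<in> tw_words n"
  by (auto simp: tw_words_def)

lemma tw_equiv: "equiv (tw_words n) (tw_rel n)"
proof (rule equivI)
  show "tw_rel n \<subseteq> tw_words n \<times> tw_words n" by (auto simp: tw_rel_def)
  show "refl_on (tw_words n) (tw_rel n)"
    unfolding tw_rel_def refl_on_def by blast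
  show "sym (tw_rel n)"
    unfolding sym_def tw_rel_iff
    by (metis converse_Un converse_converse rtrancl_converseI sup_commute)
  show "trans (tw_rel n)"
    unfolding trans_def tw_rel_iff by (meson rtrancl_trans)
qed

lemma tw_rel_cong:
  assumes "(a, b) \<in> tw_rel n" "(c, d) \<in> tw_rel n"
  shows "(a @ c, b @ d) \<in> tw_rel n"
proof -
  have "(a @ c, b @ c) \<in> (tw_sym n)\<^sup>*" using assms tw_sym_append1 by (auto simp: tw_rel_iff)
  moreover have "(b @ c, b @ d) \<in> (tw_sym n)\<^sup>*" using assms tw_sym_append2 by (auto simp: tw_rel_iff)
  ultimately show ?thesis using assms by (auto simp: tw_rel_iff intro: rtrancl_trans)
qed

definition cls :: "nat \<Rightarrow> nat list \<Rightarrow> nat list set" where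
  "cls n w = tw_rel n `` {w}"

lemma cls_eq_iff:
  "a \<in> tw_words n \<Longrightarrow> b \<in> tw_words n \<Longrightarrow> cls n a = cls n b \<longleftrightarrow> (a, b) \<in> tw_rel n"
  unfolding cls_def using equiv_class_eq_iff[OF tw_equiv, of a b n] by auto

lemma cls_self: "a \<in> tw_words n \<Longrightarrow> a \<in> cls n a"
  unfolding cls_def by (rule equiv_class_self[OF tw_equiv])

lemma cls_mem: "b \<in> cls n a \<Longrightarrow> (a, b) \<in> tw_rel n"
  unfolding cls_def by simp

lemma carrier_tw: "carrier (twin_group n) = cls n ` tw_words n"
  unfolding twin_group_def quotient_def cls_def by auto

lemma mult_tw:
  assumes "a \<in> tw_words n" "b \<in> tw_words n"
  shows "cls n a \<otimes>\<^bsub>twin_group n\<^esub> cls n b = cls n (a @ b)"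
proof -
  have "\<And>a' b'. a' \<in> cls n a \<Longrightarrow> b' \<in> cls n b \<Longrightarrow> tw_rel n `` {a' @ b'} = cls n (a @ b)"
  proof -
    fix a' b' assume "a' \<in> cls n a" "b' \<in> cls n b"
    then have "(a @ b, a' @ b') \<in> tw_rel n" using tw_rel_cong cls_mem by blast
    then show "tw_rel n `` {a' @ b'} = cls n (a @ b)"
      unfolding cls_def using tw_equiv by (metis equiv_class_eq)
  qed
  moreover have "a \<in> cls n a" "b \<in> cls n b" using assms cls_self by auto
  ultimately show ?thesis unfolding twin_group_def by auto
qed

lemma one_tw: "\<one>\<^bsub>twin_group n\<^esub> = cls n []"
  unfolding twin_group_def cls_def by simp

lemma rev_cancel: "a \<in> tw_words n \<Longrightarrow> (rev a @ a, []) \<in> tw_rel n"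
proof (induction a)
  case (Cons i a)
  have "(rev a @ [i, i] @ a, rev a @ a) \<in> tw_step n"
    using Cons.prems unfolding tw_step_def by (intro UnI1 CollectI exI[of _ "rev a"] exI[of _ a] exI[of _ i]) auto
  then have "(rev a @ [i, i] @ a, rev a @ a) \<in> (tw_sym n)\<^sup>*" by auto
  then show ?case using Cons by (auto simp: tw_rel_iff intro: rtrancl_trans)
qed (simp add: tw_rel_iff)

lemma group_tw: "group (twin_group n)"
proof (rule groupI)
  fix x y assume "x \<in> carrier (twin_group n)" "y \<in> carrier (twin_group n)"
  then show "x \<otimes>\<^bsub>twin_group n\<^esub> y \<in> carrier (twin_group n)"
    by (auto simp: carrier_tw mult_tw)
next
  show "\<one>\<^bsub>twin_group n\<^esub> \<in> carrier (twin_group n)" by (auto simp: carrier_tw one_tw)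
next
  fix x y z assume "x \<in> carrier (twin_group n)" "y \<in> carrier (twin_group n)" "z \<in> carrier (twin_group n)"
  then show "x \<otimes>\<^bsub>twin_group n\<^esub> y \<otimes>\<^bsub>twin_group n\<^esub> z = x \<otimes>\<^bsub>twin_group n\<^esub> (y \<otimes>\<^bsub>twin_group n\<^esub> z)"
    by (auto simp: carrier_tw mult_tw)
next
  fix x assume "x \<in> carrier (twin_group n)"
  then show "\<one>\<^bsub>twin_group n\<^esub> \<otimes>\<^bsub>twin_group n\<^esub> x = x"
    by (auto simp: carrier_tw mult_tw one_tw)
next
  fix x assume "x \<in> carrier (twin_group n)"
  then obtain a where a: "a \<in> tw_words n" "x = cls n a" by (auto simp: carrier_tw)
  then have "cls n (rev a) \<otimes>\<^bsub>twin_group n\<^esub> x = \<one>\<^bsub>twin_group n\<^esub>"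
    using rev_cancel[of a n] by (simp add: mult_tw one_tw cls_eq_iff)
  moreover have "cls n (rev a) \<in> carrier (twin_group n)" using a by (auto simp: carrier_tw)
  ultimately show "\<exists>y\<in>carrier (twin_group n). y \<otimes>\<^bsub>twin_group n\<^esub> x = \<one>\<^bsub>twin_group n\<^esub>" by blast
qed

lemma inv_tw: "a \<in> tw_words n \<Longrightarrow> inv\<^bsub>twin_group n\<^esub> (cls n a) = cls n (rev a)"
proof -
  assume a: "a \<in> tw_words n"
  have "cls n (rev a) \<otimes>\<^bsub>twin_group n\<^esub> cls n a = \<one>\<^bsub>twin_group n\<^esub>"
    using rev_cancel[OF a] a by (simp add: mult_tw one_tw cls_eq_iff)
  then show ?thesis by (rule group.inv_equality[OF group_tw]) (use a in \<open>auto simp: carrier_tw\<close>)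
qed

lemma cls_in_carrier[simp]: "cls n a \<in> carrier (twin_group n) \<longleftrightarrow> a \<in> tw_words n"
proof
  assume "cls n a \<in> carrier (twin_group n)"
  then obtain b where "b \<in> tw_words n" "cls n a = cls n b" by (auto simp: carrier_tw)
  then show "a \<in> tw_words n"
    by (metis Image_singleton_iff cls_def cls_self tw_rel_iff)
qed (simp add: carrier_tw)

lemma cls_cancel:
  assumes "set u \<subseteq> {1..<n}" "set v \<subseteq> {1..<n}" "1 \<le> i" "i < n"
  shows "cls n (u @ i # i # v) = cls n (u @ v)"
proof -
  have "(u @ [i, i] @ v, u @ v) \<in> tw_step n"
    using assms unfolding tw_step_def tw_words_def by (intro UnI1 CollectI exI[of _ u] exI[of _ v] exI[of _ i]) auto
  then show ?thesis using assms by (subst cls_eq_iff) (auto simp: tw_rel_iff tw_words_def)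
qed

lemma cls_swap:
  assumes "set u \<subseteq> {1..<n}" "set v \<subseteq> {1..<n}" "1 \<le> i" "i < n" "1 \<le> j" "j < n" "i + 1 < j \<or> j + 1 < i"
  shows "cls n (u @ i # j # v) = cls n (u @ j # i # v)"
proof -
  have "(u @ [i, j] @ v, u @ [j, i] @ v) \<in> tw_step n"
    using assms unfolding tw_step_def tw_words_def
    by (intro UnI2 CollectI exI[of _ u] exI[of _ v] exI[of _ i] exI[of _ j]) auto
  then show ?thesis using assms by (subst cls_eq_iff) (auto simp: tw_rel_iff tw_words_def)
qed


definition evw :: "nat list \<Rightarrow> bool" where "evw w \<longleftrightarrow> (\<forall>i. even (count_list w i))"

definition Ev :: "nat \<Rightarrow> nat list set set" where
  "Ev n = cls n ` {w \<in> tw_words n. evw w}"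

lemma Ev_subgroup: "subgroup (Ev n) (twin_group n)"
proof (rule group.subgroupI[OF group_tw])
  show "Ev n \<subseteq> carrier (twin_group n)" by (auto simp: Ev_def)
  have "cls n [] \<in> Ev n" unfolding Ev_def by (rule imageI) (auto simp: evw_def)
  then show "Ev n \<noteq> {}" by blast
  fix a assume "a \<in> Ev n"
  then obtain w where w: "w \<in> tw_words n" "evw w" "a = cls n w" by (auto simp: Ev_def)
  then show "inv\<^bsub>twin_group n\<^esub> a \<in> Ev n"
    by (auto simp: inv_tw Ev_def evw_def intro!: image_eqI[of _ _ "rev w"])
next
  fix a b assume "a \<in> Ev n" "b \<in> Ev n"
  then obtain w u where w: "w \<in> tw_words n" "evw w" "a = cls n w" "u \<in> tw_words n" "evw u" "b = cls n u"
    by (auto simp: Ev_def)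
  then show "a \<otimes>\<^bsub>twin_group n\<^esub> b \<in> Ev n"
    by (auto simp: mult_tw Ev_def evw_def intro!: image_eqI[of _ _ "w @ u"])
qed

lemma derived_Ev: "derived (twin_group n) (carrier (twin_group n)) \<subseteq> Ev n"
  unfolding derived_def
proof (rule group.generate_subgroup_incl[OF group_tw _ Ev_subgroup])
  show "derived_set (twin_group n) (carrier (twin_group n)) \<subseteq> Ev n"
  proof clarify
    fix x y assume "x \<in> carrier (twin_group n)" "y \<in> carrier (twin_group n)"
    then obtain a b where ab: "a \<in> tw_words n" "b \<in> tw_words n" "x = cls n a" "y = cls n b"
      by (auto simp: carrier_tw)
    then show "x \<otimes>\<^bsub>twin_group n\<^esub> y \<otimes>\<^bsub>twin_group n\<^esub> inv\<^bsub>twin_group n\<^esub> x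
        \<otimes>\<^bsub>twin_group n\<^esub> inv\<^bsub>twin_group n\<^esub> y \<in> Ev n"
      by (auto simp: mult_tw inv_tw Ev_def evw_def intro!: image_eqI[of _ _ "a @ b @ rev a @ rev b"])
  qed
qed

definition tog :: "nat \<Rightarrow> nat set \<Rightarrow> nat set" where
  "tog i v = (if i \<in> v then v - {i} else insert i v)"

definition Fv :: "nat \<Rightarrow> nat \<Rightarrow> nat set \<Rightarrow> (nat \<Rightarrow>\<^sub>0 int)" where
  "Fv m i v = (if 2 \<le> i \<and> i \<le> m + 1 \<and> i - 1 \<in> v then frag_of (i - 2) else 0)
     - (if 2 \<le> i \<and> i \<le> m \<and> i - 1 \<in> v \<and> i + 1 \<in> v then frag_of (m + i - 2) else 0)"

fun val :: "nat \<Rightarrow> nat set \<Rightarrow> nat list \<Rightarrow> (nat \<Rightarrow>\<^sub>0 int)" where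
  "val m v [] = 0"
| "val m v (i # w) = (if i \<in> v then - Fv m i v else Fv m i v) + val m (tog i v) w"

definition vtx :: "nat set \<Rightarrow> nat list \<Rightarrow> nat set" where
  "vtx v w = {i. (i \<in> v) \<noteq> odd (count_list w i)}"

lemma vtx_Cons: "vtx v (i # w) = vtx (tog i v) w"
  by (auto simp: vtx_def tog_def)

lemma vtx_append: "vtx v (a @ b) = vtx (vtx v a) b"
  by (auto simp: vtx_def)

lemma vtx_ev: "evw w \<Longrightarrow> vtx v w = v"
  by (auto simp: vtx_def evw_def)

lemma val_append: "val m v (a @ b) = val m v a + val m (vtx v a) b"
proof (induction a arbitrary: v)
  case Nil then show ?case by (simp add: vtx_def)
next
  case (Cons i a) then show ?case by (simp add: vtx_Cons add.assoc)
qed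

lemma Fv_tog: "j + 1 \<noteq> i \<Longrightarrow> j \<noteq> i + 1 \<Longrightarrow> Fv m i (tog j v) = Fv m i v"
  unfolding Fv_def tog_def by (cases "2 \<le> i") auto

lemma val_cancel: "val m x [i, i] = 0" "vtx x [i, i] = x"
  using Fv_tog[of i i m x] by (auto simp: vtx_def tog_def split: if_splits)

lemma val_cancel': "val m y (i # i # w) = val m y w"
  using val_append[of m y "[i, i]" w] by (simp only: val_cancel append.simps) simp

lemma val_swap: "i + 1 < j \<or> j + 1 < i \<Longrightarrow> val m x [i, j] = val m x [j, i]"
  "vtx x [i, j] = vtx x [j, i]"
proof -
  assume h: "i + 1 < j \<or> j + 1 < i"
  have "Fv m j (tog i x) = Fv m j x" "Fv m i (tog j x) = Fv m i x"
    using h by (auto intro!: Fv_tog)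
  then show "val m x [i, j] = val m x [j, i]"
    using h by (auto simp: tog_def add_ac)
qed (auto simp: vtx_def)

lemma val_swap': "i + 1 < j \<or> j + 1 < i \<Longrightarrow> val m y (i # j # w) = val m y (j # i # w)"
proof -
  assume h: "i + 1 < j \<or> j + 1 < i"
  have 1: "val m y (i # j # w) = val m y [i, j] + val m (vtx y [i, j]) w"
    using val_append[of m y "[i, j]" w] by (simp only: append.simps)
  have 2: "val m y (j # i # w) = val m y [j, i] + val m (vtx y [j, i]) w"
    using val_append[of m y "[j, i]" w] by (simp only: append.simps)
  show ?thesis unfolding 1 2 using val_swap(1)[OF h, of m y] val_swap(2)[of y i j] by simp
qed

lemma val_step: "(a, b) \<in> tw_step n \<Longrightarrow> val m v a = val m v b"
  unfolding tw_step_def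
  by (auto simp: val_append val_cancel' val_swap' simp del: val.simps)

lemma val_sym: "(a, b) \<in> (tw_sym n)\<^sup>* \<Longrightarrow> val m v a = val m v b"
proof (induction rule: rtrancl_induct)
  case (step y z)
  then show ?case using val_step[of y z n m v] val_step[of z y n m v] by auto
qed simp

lemma val_rel: "(a, b) \<in> tw_rel n \<Longrightarrow> val m v a = val m v b"
  by (auto simp: tw_rel_iff intro: val_sym)

definition psiF :: "nat \<Rightarrow> nat list set \<Rightarrow> (nat \<Rightarrow>\<^sub>0 int)" where
  "psiF m S = val m {} (SOME w. w \<in> S)"

lemma psiF_cls: "w \<in> tw_words n \<Longrightarrow> psiF m (cls n w) = val m {} w"
  unfolding psiF_def by (metis cls_mem cls_self someI val_rel)

lemma Fv_keys: "Poly_Mapping.keys (Fv m i v) \<subseteq> {..<2 * m - 1}"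
proof -
  have "Poly_Mapping.keys (Fv m i v) \<subseteq>
      Poly_Mapping.keys (if 2 \<le> i \<and> i \<le> m + 1 \<and> i - 1 \<in> v then frag_of (i - 2) else 0)
    \<union> Poly_Mapping.keys (if 2 \<le> i \<and> i \<le> m \<and> i - 1 \<in> v \<and> i + 1 \<in> v then frag_of (m + i - 2) else (0::nat \<Rightarrow>\<^sub>0 int))"
    unfolding Fv_def by (rule keys_diff)
  also have "\<dots> \<subseteq> {..<2 * m - 1}" by (auto simp: keys_frag_of)
  finally show ?thesis .
qed

lemma val_keys: "Poly_Mapping.keys (val m v w) \<subseteq> {..<2 * m - 1}"
proof (induction w arbitrary: v)
  case (Cons i w)
  have "Poly_Mapping.keys (val m v (i # w)) \<subseteq>
     Poly_Mapping.keys (if i \<in> v then - Fv m i v else Fv m i v) \<union> Poly_Mapping.keys (val m (tog i v) w)"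
    by (simp only: val.simps keys_add)
  also have "\<dots> \<subseteq> {..<2 * m - 1}" using Cons[of "tog i v"] Fv_keys[of m i v] by auto
  finally show ?case .
qed simp


lemma R4_word:
  assumes "1 \<le> i" "i + 2 < n"
  shows "cls n [Suc (Suc i), i, Suc i, i, Suc i, Suc (Suc i), Suc i, i, Suc i, i, i, Suc i, Suc (Suc i), Suc i, Suc (Suc i), i, Suc (Suc i), Suc i, Suc (Suc i), Suc i]
       = cls n [i, Suc (Suc i), Suc i, i, Suc (Suc i), Suc i, Suc i, Suc (Suc i), Suc i, Suc (Suc i), Suc i, Suc (Suc i), i, Suc i, Suc (Suc i), i, Suc (Suc i), Suc i, Suc (Suc i), Suc i]"
proof -
  have "cls n [Suc (Suc i), i, Suc i, i, Suc i, Suc (Suc i), Suc i, i, Suc i, i, i, Suc i, Suc (Suc i), Suc i, Suc (Suc i), i, Suc (Suc i), Suc i, Suc (Suc i), Suc i] = cls n [Suc (Suc i), i, Suc i, i, Suc i, Suc (Suc i), Suc i, i, Suc i, Suc i, Suc (Suc i), Suc i, Suc (Suc i), i, Suc (Suc i), Suc i, Suc (Suc i), Suc i]"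
    using cls_cancel[where u="[Suc (Suc i), i, Suc i, i, Suc i, Suc (Suc i), Suc i, i, Suc i]" and v="[Suc i, Suc (Suc i), Suc i, Suc (Suc i), i, Suc (Suc i), Suc i, Suc (Suc i), Suc i]" and i="i"] assms by simp
  also have "\<dots> = cls n [Suc (Suc i), i, Suc i, i, Suc i, Suc (Suc i), Suc i, i, Suc (Suc i), Suc i, Suc (Suc i), i, Suc (Suc i), Suc i, Suc (Suc i), Suc i]"
    using cls_cancel[where u="[Suc (Suc i), i, Suc i, i, Suc i, Suc (Suc i), Suc i, i]" and v="[Suc (Suc i), Suc i, Suc (Suc i), i, Suc (Suc i), Suc i, Suc (Suc i), Suc i]" and i="Suc i"] assms by simp
  also have "\<dots> = cls n [Suc (Suc i), i, Suc i, i, Suc i, Suc (Suc i), Suc i, i, Suc (Suc i), Suc i, Suc (Suc i), Suc (Suc i), i, Suc i, Suc (Suc i), Suc i]"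
    using cls_swap[where u="[Suc (Suc i), i, Suc i, i, Suc i, Suc (Suc i), Suc i, i, Suc (Suc i), Suc i, Suc (Suc i)]" and v="[Suc i, Suc (Suc i), Suc i]" and i="i" and j="Suc (Suc i)"] assms by simp
  also have "\<dots> = cls n [Suc (Suc i), i, Suc i, i, Suc i, Suc (Suc i), Suc i, i, Suc (Suc i), Suc i, i, Suc i, Suc (Suc i), Suc i]"
    using cls_cancel[where u="[Suc (Suc i), i, Suc i, i, Suc i, Suc (Suc i), Suc i, i, Suc (Suc i), Suc i]" and v="[i, Suc i, Suc (Suc i), Suc i]" and i="Suc (Suc i)"] assms by simp
  also have "\<dots> = cls n [i, Suc (Suc i), Suc i, i, Suc i, Suc (Suc i), Suc i, i, Suc (Suc i), Suc i, i, Suc i, Suc (Suc i), Suc i]"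
    using cls_swap[where u="[]" and v="[Suc i, i, Suc i, Suc (Suc i), Suc i, i, Suc (Suc i), Suc i, i, Suc i, Suc (Suc i), Suc i]" and i="Suc (Suc i)" and j="i"] assms by simp
  also have "\<dots> = cls n [i, Suc (Suc i), Suc i, i, Suc i, Suc (Suc i), Suc i, Suc (Suc i), i, Suc i, i, Suc i, Suc (Suc i), Suc i]"
    by (rule sym, insert cls_swap[where u="[i, Suc (Suc i), Suc i, i, Suc i, Suc (Suc i), Suc i]" and v="[Suc i, i, Suc i, Suc (Suc i), Suc i]" and i="Suc (Suc i)" and j="i"] assms, simp)
  also have "\<dots> = cls n [i, Suc (Suc i), Suc i, i, Suc i, Suc (Suc i), Suc i, Suc (Suc i), i, Suc i, Suc (Suc i), Suc (Suc i), i, Suc i, Suc (Suc i), Suc i]"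
    by (rule sym, insert cls_cancel[where u="[i, Suc (Suc i), Suc i, i, Suc i, Suc (Suc i), Suc i, Suc (Suc i), i, Suc i]" and v="[i, Suc i, Suc (Suc i), Suc i]" and i="Suc (Suc i)"] assms, simp)
  also have "\<dots> = cls n [i, Suc (Suc i), Suc i, i, Suc i, Suc (Suc i), Suc i, Suc (Suc i), i, Suc i, Suc (Suc i), i, Suc (Suc i), Suc i, Suc (Suc i), Suc i]"
    by (rule sym, insert cls_swap[where u="[i, Suc (Suc i), Suc i, i, Suc i, Suc (Suc i), Suc i, Suc (Suc i), i, Suc i, Suc (Suc i)]" and v="[Suc i, Suc (Suc i), Suc i]" and i="i" and j="Suc (Suc i)"] assms, simp)
  also have "\<dots> = cls n [i, Suc (Suc i), Suc i, i, Suc (Suc i), Suc (Suc i), Suc i, Suc (Suc i), Suc i, Suc (Suc i), i, Suc i, Suc (Suc i), i, Suc (Suc i), Suc i, Suc (Suc i), Suc i]"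
    by (rule sym, insert cls_cancel[where u="[i, Suc (Suc i), Suc i, i]" and v="[Suc i, Suc (Suc i), Suc i, Suc (Suc i), i, Suc i, Suc (Suc i), i, Suc (Suc i), Suc i, Suc (Suc i), Suc i]" and i="Suc (Suc i)"] assms, simp)
  also have "\<dots> = cls n [i, Suc (Suc i), Suc i, i, Suc (Suc i), Suc i, Suc i, Suc (Suc i), Suc i, Suc (Suc i), Suc i, Suc (Suc i), i, Suc i, Suc (Suc i), i, Suc (Suc i), Suc i, Suc (Suc i), Suc i]"
    by (rule sym, insert cls_cancel[where u="[i, Suc (Suc i), Suc i, i, Suc (Suc i)]" and v="[Suc (Suc i), Suc i, Suc (Suc i), Suc i, Suc (Suc i), i, Suc i, Suc (Suc i), i, Suc (Suc i), Suc i, Suc (Suc i), Suc i]" and i="Suc i"] assms, simp)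

  finally show ?thesis .
qed

lemma E1_word:
  assumes "1 \<le> i" "i + 1 < n" "1 \<le> l" "l < n" "l + 2 \<le> i \<or> i + 3 \<le> l"
  shows "cls n [l, i, Suc i, i, Suc i, l] = cls n [i, Suc i, i, Suc i]"
proof -
  have f1: "l + 1 < i \<or> i + 1 < l" and f2: "l + 1 < Suc i \<or> Suc i + 1 < l" using assms(5) by auto
  have "cls n [l, i, Suc i, i, Suc i, l] = cls n [i, l, Suc i, i, Suc i, l]"
    using cls_swap[where u="[]" and v="[Suc i, i, Suc i, l]" and i=l and j=i] assms f1 by simp
  also have "\<dots> = cls n [i, Suc i, l, i, Suc i, l]"
    using cls_swap[where u="[i]" and v="[i, Suc i, l]" and i=l and j="Suc i"] assms f2 by simp
  also have "\<dots> = cls n [i, Suc i, i, l, Suc i, l]"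
    using cls_swap[where u="[i, Suc i]" and v="[Suc i, l]" and i=l and j="i"] assms f1 by simp
  also have "\<dots> = cls n [i, Suc i, i, Suc i, l, l]"
    using cls_swap[where u="[i, Suc i, i]" and v="[l]" and i=l and j="Suc i"] assms f2 by simp
  also have "\<dots> = cls n [i, Suc i, i, Suc i]"
    using cls_cancel[where u="[i, Suc i, i, Suc i]" and v="[]" and i=l] assms by simp
  finally show ?thesis .
qed

lemma E2_word:
  assumes "1 \<le> i" "i + 1 < n"
  shows "cls n [i, i, Suc i, i, Suc i, i] = cls n [Suc i, i, Suc i, i]"
    "cls n [Suc i, i, Suc i, i, Suc i, Suc i] = cls n [Suc i, i, Suc i, i]"
  using cls_cancel[where u="[]" and v="[Suc i, i, Suc i, i]" and i=i] 
    cls_cancel[where u="[Suc i, i, Suc i, i]" and v="[]" and i="Suc i"] assms by simp_all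

lemma X_word:
  assumes "1 \<le> i" "i + 2 < n"
  shows "cls n [i, Suc (Suc i), Suc i, Suc (Suc i), i, Suc i] = cls n [i, Suc (Suc i), Suc i, i, Suc (Suc i), Suc i]"
  using cls_swap[where u="[i, Suc (Suc i), Suc i]" and v="[Suc i]" and i="Suc (Suc i)" and j=i] assms by simp

locale tw =
  fixes m n :: nat
  assumes m1: "1 \<le> m" and nm: "n = m + 2"
begin

abbreviation "G \<equiv> twin_group n"
abbreviation "K \<equiv> derived G (carrier G)"
abbreviation "K2 \<equiv> derived G K"
abbreviation "H \<equiv> G\<lparr>carrier := K\<rparr>"
abbreviation "F \<equiv> free_Abelian_group {..<2 * m - 1}"
abbreviation "M \<equiv> H Mod K2"

lemma grp: "group G" by (rule group_tw)

definition c :: "nat \<Rightarrow> nat list set" where "c l = cls n [l]"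
definition cj :: "nat \<Rightarrow> nat list set \<Rightarrow> nat list set" where
  "cj l y = c l \<otimes>\<^bsub>G\<^esub> y \<otimes>\<^bsub>G\<^esub> c l"
definition xe :: "nat \<Rightarrow> nat list set" where "xe i = cls n [i, Suc i, i, Suc i]"
definition ng :: "nat \<Rightarrow> nat list set" where
  "ng j = cj (j - 1) (xe j) \<otimes>\<^bsub>G\<^esub> inv\<^bsub>G\<^esub> (xe j)"

lemma c_carrier: "1 \<le> l \<Longrightarrow> l < n \<Longrightarrow> c l \<in> carrier G"
  by (simp add: c_def)

lemma c_c: "1 \<le> l \<Longrightarrow> l < n \<Longrightarrow> c l \<otimes>\<^bsub>G\<^esub> c l = \<one>\<^bsub>G\<^esub>"
  using cls_cancel[where u="[]" and v="[]" and i=l and n=n]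
  by (simp add: c_def mult_tw one_tw)

lemma c_inv: "1 \<le> l \<Longrightarrow> l < n \<Longrightarrow> inv\<^bsub>G\<^esub> (c l) = c l"
  by (simp add: c_def inv_tw)

lemma cj_cls: "1 \<le> l \<Longrightarrow> l < n \<Longrightarrow> w \<in> tw_words n \<Longrightarrow> cj l (cls n w) = cls n (l # w @ [l])"
  by (simp add: cj_def c_def mult_tw)

lemma cj_closed: "1 \<le> l \<Longrightarrow> l < n \<Longrightarrow> y \<in> carrier G \<Longrightarrow> cj l y \<in> carrier G"
  unfolding cj_def using c_carrier monoid.m_closed[OF group.is_monoid[OF grp]] by blast

lemma cj_alt: "1 \<le> l \<Longrightarrow> l < n \<Longrightarrow> cj l y = c l \<otimes>\<^bsub>G\<^esub> y \<otimes>\<^bsub>G\<^esub> inv\<^bsub>G\<^esub> (c l)"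
  using c_inv by (simp add: cj_def)

lemma cj_mult:
  assumes "1 \<le> l" "l < n" "a \<in> carrier G" "b \<in> carrier G"
  shows "cj l (a \<otimes>\<^bsub>G\<^esub> b) = cj l a \<otimes>\<^bsub>G\<^esub> cj l b"
proof -
  interpret group G by (rule grp)
  have cc: "c l \<in> carrier G" "c l \<otimes>\<^bsub>G\<^esub> c l = \<one>\<^bsub>G\<^esub>" using assms c_carrier c_c by auto
  have cc2: "\<And>y. y \<in> carrier G \<Longrightarrow> c l \<otimes>\<^bsub>G\<^esub> (c l \<otimes>\<^bsub>G\<^esub> y) = y" using cc by (metis m_assoc l_one)
  show ?thesis using cc assms cc2[of "b \<otimes>\<^bsub>G\<^esub> c l"] by (simp add: cj_def m_assoc)
qed

lemma cj_inv:
  assumes "1 \<le> l" "l < n" "a \<in> carrier G"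
  shows "cj l (inv\<^bsub>G\<^esub> a) = inv\<^bsub>G\<^esub> (cj l a)"
proof -
  interpret group G by (rule grp)
  have cc: "c l \<in> carrier G" "inv\<^bsub>G\<^esub> (c l) = c l" using assms c_carrier c_inv by auto
  show ?thesis using cc assms by (simp add: cj_def inv_mult_group m_assoc)
qed

lemma cj_cj:
  assumes "1 \<le> l" "l < n" "a \<in> carrier G"
  shows "cj l (cj l a) = a"
proof -
  interpret group G by (rule grp)
  have cc: "c l \<in> carrier G" "c l \<otimes>\<^bsub>G\<^esub> c l = \<one>\<^bsub>G\<^esub>" using assms c_carrier c_c by auto
  have cc2: "\<And>y. y \<in> carrier G \<Longrightarrow> c l \<otimes>\<^bsub>G\<^esub> (c l \<otimes>\<^bsub>G\<^esub> y) = y" using cc by (metis m_assoc l_one)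
  show ?thesis using cc assms by (simp add: cj_def m_assoc cc2 m_closed)
qed

lemma K_normal: "K \<lhd> G"
  using group.derived_self_is_normal[OF grp] .

lemma K_sub: "subgroup K G"
  using K_normal normal_def by blast

lemma K2_normal: "K2 \<lhd> G"
  using group.derived_is_normal[OF grp K_normal] .

lemma K2_sub_K: "K2 \<subseteq> K"
  using group.derived_incl[OF grp subset_refl K_sub] .

lemma comm_in_K:
  assumes "a \<in> carrier G" "b \<in> carrier G"
  shows "a \<otimes>\<^bsub>G\<^esub> b \<otimes>\<^bsub>G\<^esub> inv\<^bsub>G\<^esub> a \<otimes>\<^bsub>G\<^esub> inv\<^bsub>G\<^esub> b \<in> K"
  unfolding derived_def using assms by (intro generate.incl) blast

lemma comm_in_K2:
  assumes "a \<in> K" "b \<in> K"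
  shows "a \<otimes>\<^bsub>G\<^esub> b \<otimes>\<^bsub>G\<^esub> inv\<^bsub>G\<^esub> a \<otimes>\<^bsub>G\<^esub> inv\<^bsub>G\<^esub> b \<in> K2"
  unfolding derived_def[of G K] using assms by (intro generate.incl) blast

lemma xe_K: "1 \<le> i \<Longrightarrow> i + 1 < n \<Longrightarrow> xe i \<in> K"
  using comm_in_K[of "c i" "c (Suc i)"]
  by (simp add: c_def xe_def mult_tw inv_tw)

lemma xe_carrier: "1 \<le> i \<Longrightarrow> i + 1 < n \<Longrightarrow> xe i \<in> carrier G"
  by (simp add: xe_def)

lemma ng_K: "1 \<le> k \<Longrightarrow> k + 2 < n \<Longrightarrow> ng (Suc k) \<in> K"
  using comm_in_K[of "c k" "xe (Suc k)"] xe_carrier[of "Suc k"] c_inv[of k]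
  by (simp add: ng_def cj_def c_carrier)

lemma ng_cls: "1 \<le> k \<Longrightarrow> k + 2 < n \<Longrightarrow>
  ng (Suc k) = cls n [k, Suc k, Suc (Suc k), Suc k, Suc (Suc k), k, Suc (Suc k), Suc k, Suc (Suc k), Suc k]"
  by (simp add: ng_def cj_def c_def xe_def mult_tw inv_tw)

lemma psi_xe: "1 \<le> i \<Longrightarrow> i \<le> m \<Longrightarrow> psiF m (xe i) = frag_of (i - 1)"
proof -
  assume h: "1 \<le> i" "i \<le> m"
  then have "i + 1 < n" using nm by simp
  then show ?thesis unfolding xe_def using h by (auto simp: psiF_cls tog_def Fv_def)
qed

lemma psi_ng: "1 \<le> k \<Longrightarrow> k + 1 \<le> m \<Longrightarrow> psiF m (ng (Suc k)) = frag_of (m + k - 1)"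
proof -
  assume h: "1 \<le> k" "k + 1 \<le> m"
  then have "k + 2 < n" using nm by simp
  then show ?thesis unfolding ng_cls[OF h(1) \<open>k + 2 < n\<close>] using h by (auto simp: psiF_cls tog_def Fv_def)
qed

end


lemma (in group) cancel_l: "x \<in> carrier G \<Longrightarrow> y \<in> carrier G \<Longrightarrow> x \<otimes> (inv x \<otimes> y) = y"
  by (simp add: m_assoc[symmetric])

lemma (in group) cancel_l2: "x \<in> carrier G \<Longrightarrow> y \<in> carrier G \<Longrightarrow> inv x \<otimes> (x \<otimes> y) = y"
  by (simp add: m_assoc[symmetric])

lemma (in group) id1: "g \<in> carrier G \<Longrightarrow> x \<in> carrier G \<Longrightarrow> y \<in> carrier G \<Longrightarrow>
  g \<otimes> (x \<otimes> inv y) \<otimes> inv g = (g \<otimes> x \<otimes> inv g) \<otimes> inv (g \<otimes> y \<otimes> inv g)"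
  by (simp add: m_assoc inv_mult_group cancel_l2)

lemma (in group) id2: "a \<in> carrier G \<Longrightarrow> b \<in> carrier G \<Longrightarrow> u \<in> carrier G \<Longrightarrow>
  a \<otimes> (b \<otimes> u \<otimes> inv b) \<otimes> inv a = (a \<otimes> b \<otimes> inv a \<otimes> inv b) \<otimes> (b \<otimes> (a \<otimes> u \<otimes> inv a) \<otimes> inv b) \<otimes> inv (a \<otimes> b \<otimes> inv a \<otimes> inv b)"
  by (simp add: m_assoc inv_mult_group cancel_l2 cancel_l)

lemma (in comm_group) cg1: "a \<in> carrier G \<Longrightarrow> w \<in> carrier G \<Longrightarrow> a \<otimes> w \<otimes> inv a = w"
  by (metis inv_closed m_assoc m_comm r_inv r_one)

context tw
begin

lemma H_group: "group H"
  using group.subgroup_imp_group[OF grp K_sub] .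

lemma K2_normal_H: "K2 \<lhd> H"
  using group.derived_subgroup_is_normal[OF grp K_sub] .

lemma M_comm: "comm_group M"
  using group.derived_quot_of_subgroup_is_comm_group[OF grp K_sub] .

definition q :: "nat list set \<Rightarrow> nat list set set" where "q y = K2 #>\<^bsub>H\<^esub> y"

lemma q_hom: "q \<in> hom H M"
  unfolding q_def using normal.r_coset_hom_Mod[OF K2_normal_H] .

lemma q_group_hom: "group_hom H M q"
  using q_hom H_group M_comm by (simp add: group_hom_def group_hom_axioms_def comm_group.axioms(2))

lemma q_carrier: "x \<in> K \<Longrightarrow> q x \<in> carrier M"
  using q_hom by (auto simp: hom_def)

lemma q_mult: "x \<in> K \<Longrightarrow> y \<in> K \<Longrightarrow> q (x \<otimes>\<^bsub>G\<^esub> y) = q x \<otimes>\<^bsub>M\<^esub> q y"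
  using q_hom by (auto simp: hom_def)

lemma q_inv: "x \<in> K \<Longrightarrow> q (inv\<^bsub>G\<^esub> x) = inv\<^bsub>M\<^esub> (q x)"
proof -
  assume x: "x \<in> K"
  have 1: "inv\<^bsub>H\<^esub> x = inv\<^bsub>G\<^esub> x" by (rule group.m_inv_consistent[OF grp K_sub x])
  have 2: "q (inv\<^bsub>H\<^esub> x) = inv\<^bsub>M\<^esub> (q x)" by (rule group_hom.hom_inv[OF q_group_hom]) (simp add: x)
  show ?thesis using 2 unfolding 1 .
qed

lemma q_one: "q \<one>\<^bsub>G\<^esub> = \<one>\<^bsub>M\<^esub>"
proof -
  have e: "\<one>\<^bsub>H\<^esub> = \<one>\<^bsub>G\<^esub>" by simp
  show ?thesis using group_hom.hom_one[OF q_group_hom] unfolding e .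
qed

lemma K_carrier: "x \<in> K \<Longrightarrow> x \<in> carrier G"
  by (rule subgroup.mem_carrier[OF K_sub])

lemma K2_sub: "subgroup K2 H"
  by (rule normal_imp_subgroup[OF K2_normal_H])

lemma q_eq: assumes "x \<in> K" "y \<in> K" shows "q x = q y \<longleftrightarrow> x \<otimes>\<^bsub>G\<^esub> inv\<^bsub>G\<^esub> y \<in> K2"
proof -
  interpret Hg: group H by (rule H_group)
  interpret Gg: group G by (rule grp)
  have xG: "x \<in> carrier G" "y \<in> carrier G" using assms K_carrier by auto
  have invy: "inv\<^bsub>H\<^esub> y = inv\<^bsub>G\<^esub> y" using Gg.m_inv_consistent[OF K_sub assms(2)] .
  show ?thesis
  proof
    assume "q x = q y"
    then have "x \<in> K2 #>\<^bsub>H\<^esub> y" using Hg.rcos_self[of x K2] assms K2_sub by (simp add: q_def)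
    then obtain h where h: "h \<in> K2" "x = h \<otimes>\<^bsub>G\<^esub> y" unfolding r_coset_def by auto
    then have "x \<otimes>\<^bsub>G\<^esub> inv\<^bsub>G\<^esub> y = h" using xG K2_sub_K K_carrier by (auto simp: Gg.m_assoc)
    then show "x \<otimes>\<^bsub>G\<^esub> inv\<^bsub>G\<^esub> y \<in> K2" using h by simp
  next
    assume d: "x \<otimes>\<^bsub>G\<^esub> inv\<^bsub>G\<^esub> y \<in> K2"
    have "x = (x \<otimes>\<^bsub>G\<^esub> inv\<^bsub>G\<^esub> y) \<otimes>\<^bsub>G\<^esub> y" using xG by (simp add: Gg.m_assoc)
    then have "x \<in> K2 #>\<^bsub>H\<^esub> y" using d unfolding r_coset_def by auto
    then show "q x = q y" unfolding q_def
      using Hg.repr_independence[of x K2 y] assms K2_sub by simp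
  qed
qed

lemma conj_K: "g \<in> carrier G \<Longrightarrow> x \<in> K \<Longrightarrow> g \<otimes>\<^bsub>G\<^esub> x \<otimes>\<^bsub>G\<^esub> inv\<^bsub>G\<^esub> g \<in> K"
  using normal.inv_op_closed2[OF K_normal] .

lemma conj_K2: "g \<in> carrier G \<Longrightarrow> x \<in> K2 \<Longrightarrow> g \<otimes>\<^bsub>G\<^esub> x \<otimes>\<^bsub>G\<^esub> inv\<^bsub>G\<^esub> g \<in> K2"
  using normal.inv_op_closed2[OF K2_normal] .

lemma q_conj:
  assumes "g \<in> carrier G" "x \<in> K" "y \<in> K" "q x = q y"
  shows "q (g \<otimes>\<^bsub>G\<^esub> x \<otimes>\<^bsub>G\<^esub> inv\<^bsub>G\<^esub> g) = q (g \<otimes>\<^bsub>G\<^esub> y \<otimes>\<^bsub>G\<^esub> inv\<^bsub>G\<^esub> g)"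
proof -
  interpret Gg: group G by (rule grp)
  have xG: "x \<in> carrier G" "y \<in> carrier G" using assms K_carrier by auto
  have "x \<otimes>\<^bsub>G\<^esub> inv\<^bsub>G\<^esub> y \<in> K2" using q_eq assms by blast
  then have "g \<otimes>\<^bsub>G\<^esub> (x \<otimes>\<^bsub>G\<^esub> inv\<^bsub>G\<^esub> y) \<otimes>\<^bsub>G\<^esub> inv\<^bsub>G\<^esub> g \<in> K2" using conj_K2 assms by blast
  moreover have "g \<otimes>\<^bsub>G\<^esub> (x \<otimes>\<^bsub>G\<^esub> inv\<^bsub>G\<^esub> y) \<otimes>\<^bsub>G\<^esub> inv\<^bsub>G\<^esub> g = (g \<otimes>\<^bsub>G\<^esub> x \<otimes>\<^bsub>G\<^esub> inv\<^bsub>G\<^esub> g) \<otimes>\<^bsub>G\<^esub> inv\<^bsub>G\<^esub> (g \<otimes>\<^bsub>G\<^esub> y \<otimes>\<^bsub>G\<^esub> inv\<^bsub>G\<^esub> g)"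
    by (rule Gg.id1[OF assms(1) xG])
  ultimately show ?thesis using q_eq conj_K assms by simp
qed

lemma q_conjK:
  assumes "a \<in> K" "w \<in> K"
  shows "q (a \<otimes>\<^bsub>G\<^esub> w \<otimes>\<^bsub>G\<^esub> inv\<^bsub>G\<^esub> a) = q w"
proof -
  interpret Mg: comm_group M by (rule M_comm)
  have "a \<otimes>\<^bsub>G\<^esub> w \<in> K" by (rule subgroup.m_closed[OF K_sub assms])
  moreover have "inv\<^bsub>G\<^esub> a \<in> K" by (rule subgroup.m_inv_closed[OF K_sub assms(1)])
  ultimately have "q (a \<otimes>\<^bsub>G\<^esub> w \<otimes>\<^bsub>G\<^esub> inv\<^bsub>G\<^esub> a) = q a \<otimes>\<^bsub>M\<^esub> q w \<otimes>\<^bsub>M\<^esub> inv\<^bsub>M\<^esub> (q a)"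
    using assms by (simp add: q_mult q_inv)
  also have "\<dots> = q w" by (rule Mg.cg1[OF q_carrier[OF assms(1)] q_carrier[OF assms(2)]])
  finally show ?thesis .
qed

lemma q_swap:
  assumes "u \<in> K" "a \<in> carrier G" "b \<in> carrier G"
  shows "q (a \<otimes>\<^bsub>G\<^esub> (b \<otimes>\<^bsub>G\<^esub> u \<otimes>\<^bsub>G\<^esub> inv\<^bsub>G\<^esub> b) \<otimes>\<^bsub>G\<^esub> inv\<^bsub>G\<^esub> a) = q (b \<otimes>\<^bsub>G\<^esub> (a \<otimes>\<^bsub>G\<^esub> u \<otimes>\<^bsub>G\<^esub> inv\<^bsub>G\<^esub> a) \<otimes>\<^bsub>G\<^esub> inv\<^bsub>G\<^esub> b)"
proof -
  interpret Gg: group G by (rule grp)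
  define d where "d = a \<otimes>\<^bsub>G\<^esub> b \<otimes>\<^bsub>G\<^esub> inv\<^bsub>G\<^esub> a \<otimes>\<^bsub>G\<^esub> inv\<^bsub>G\<^esub> b"
  have dK: "d \<in> K" unfolding d_def by (rule comm_in_K[OF assms(2,3)])
  have uG: "u \<in> carrier G" using assms K_carrier by auto
  have eq: "a \<otimes>\<^bsub>G\<^esub> (b \<otimes>\<^bsub>G\<^esub> u \<otimes>\<^bsub>G\<^esub> inv\<^bsub>G\<^esub> b) \<otimes>\<^bsub>G\<^esub> inv\<^bsub>G\<^esub> a = d \<otimes>\<^bsub>G\<^esub> (b \<otimes>\<^bsub>G\<^esub> (a \<otimes>\<^bsub>G\<^esub> u \<otimes>\<^bsub>G\<^esub> inv\<^bsub>G\<^esub> a) \<otimes>\<^bsub>G\<^esub> inv\<^bsub>G\<^esub> b) \<otimes>\<^bsub>G\<^esub> inv\<^bsub>G\<^esub> d"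
    unfolding d_def by (rule Gg.id2[OF assms(2) assms(3) uG])
  have w: "b \<otimes>\<^bsub>G\<^esub> (a \<otimes>\<^bsub>G\<^esub> u \<otimes>\<^bsub>G\<^esub> inv\<^bsub>G\<^esub> a) \<otimes>\<^bsub>G\<^esub> inv\<^bsub>G\<^esub> b \<in> K" by (rule conj_K[OF assms(3) conj_K[OF assms(2) assms(1)]])
  show ?thesis unfolding eq using q_conjK[OF dK w] .
qed

end


lemma (in group) cancel_r: "a \<in> carrier G \<Longrightarrow> x \<in> carrier G \<Longrightarrow> a \<otimes> inv x \<otimes> x = a"
  by (simp add: m_assoc)

lemma (in group) inv_inv_mult: "a \<in> carrier G \<Longrightarrow> b \<in> carrier G \<Longrightarrow> inv (inv a \<otimes> b) = inv b \<otimes> a"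
  by (simp add: inv_mult_group)

lemma (in group) id3: "a \<in> carrier G \<Longrightarrow> b \<in> carrier G \<Longrightarrow> y \<in> carrier G \<Longrightarrow>
  (a \<otimes> b) \<otimes> y \<otimes> inv (a \<otimes> b) = a \<otimes> (b \<otimes> y \<otimes> inv b) \<otimes> inv a"
  by (simp add: m_assoc inv_mult_group)

lemma (in group) id4: "x \<in> carrier G \<Longrightarrow> y \<in> carrier G \<Longrightarrow> z \<in> carrier G \<Longrightarrow>
  x \<otimes> (y \<otimes> z) \<otimes> inv x \<otimes> inv (y \<otimes> z) = (x \<otimes> y \<otimes> inv x \<otimes> inv y) \<otimes> (y \<otimes> (x \<otimes> z \<otimes> inv x \<otimes> inv z) \<otimes> inv y)"
  by (simp add: m_assoc inv_mult_group cancel_l cancel_l2)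

lemma (in group) id5: "x \<in> carrier G \<Longrightarrow> y \<in> carrier G \<Longrightarrow> z \<in> carrier G \<Longrightarrow>
  (x \<otimes> y) \<otimes> z \<otimes> inv (x \<otimes> y) \<otimes> inv z = (x \<otimes> (y \<otimes> z \<otimes> inv y \<otimes> inv z) \<otimes> inv x) \<otimes> (x \<otimes> z \<otimes> inv x \<otimes> inv z)"
  by (simp add: m_assoc inv_mult_group cancel_l cancel_l2)

lemma (in comm_group) cg2: "a \<in> carrier G \<Longrightarrow> b \<in> carrier G \<Longrightarrow> inv a \<otimes> b = inv (a \<otimes> inv b)"
  by (simp add: inv_mult)

lemma (in comm_group) cg3: "v \<in> carrier G \<Longrightarrow> a \<in> carrier G \<Longrightarrow> b \<in> carrier G \<Longrightarrow>
  inv v \<otimes> a \<otimes> inv (inv v \<otimes> b) = a \<otimes> inv b"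
proof -
  assume h: "v \<in> carrier G" "a \<in> carrier G" "b \<in> carrier G"
  have "inv (inv v \<otimes> b) = v \<otimes> inv b" using h by (simp add: inv_mult)
  then have "inv v \<otimes> a \<otimes> inv (inv v \<otimes> b) = inv v \<otimes> (a \<otimes> (v \<otimes> inv b))" using h by (simp add: m_assoc)
  also have "\<dots> = inv v \<otimes> (v \<otimes> (a \<otimes> inv b))" using h by (simp add: m_lcomm)
  also have "\<dots> = a \<otimes> inv b" using h by (simp add: m_assoc[symmetric])
  finally show ?thesis .
qed

context tw
begin

lemma cjx_far: "1 \<le> l \<Longrightarrow> l < n \<Longrightarrow> 1 \<le> i \<Longrightarrow> i + 1 < n \<Longrightarrow> l + 2 \<le> i \<or> i + 3 \<le> l \<Longrightarrow> cj l (xe i) = xe i"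
  unfolding xe_def by (simp add: cj_cls E1_word)

lemma cjx_self: "1 \<le> i \<Longrightarrow> i + 1 < n \<Longrightarrow> cj i (xe i) = inv\<^bsub>G\<^esub> (xe i)"
  "1 \<le> i \<Longrightarrow> i + 1 < n \<Longrightarrow> cj (Suc i) (xe i) = inv\<^bsub>G\<^esub> (xe i)"
  unfolding xe_def by (simp_all add: cj_cls E2_word inv_tw)

lemma R4: assumes "1 \<le> i" "i + 2 < n"
  shows "cj (Suc (Suc i)) (xe i) \<otimes>\<^bsub>G\<^esub> inv\<^bsub>G\<^esub> (xe i) \<otimes>\<^bsub>G\<^esub> ng (Suc i) \<in> K2"
proof -
  define Xc where "Xc = cls n [i, Suc (Suc i), Suc i, i, Suc (Suc i), Suc i]"
  have XK: "Xc \<in> K"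
  proof -
    have "cls n [i, Suc (Suc i)] \<otimes>\<^bsub>G\<^esub> c (Suc i) \<otimes>\<^bsub>G\<^esub> inv\<^bsub>G\<^esub> (cls n [i, Suc (Suc i)]) \<otimes>\<^bsub>G\<^esub> inv\<^bsub>G\<^esub> (c (Suc i)) \<in> K"
      using assms by (intro comm_in_K) (auto simp: c_def)
    moreover have "cls n [i, Suc (Suc i)] \<otimes>\<^bsub>G\<^esub> c (Suc i) \<otimes>\<^bsub>G\<^esub> inv\<^bsub>G\<^esub> (cls n [i, Suc (Suc i)]) \<otimes>\<^bsub>G\<^esub> inv\<^bsub>G\<^esub> (c (Suc i))
       = cls n [i, Suc (Suc i), Suc i, Suc (Suc i), i, Suc i]"
      using assms by (simp add: c_def mult_tw inv_tw)
    ultimately show ?thesis unfolding Xc_def using X_word[OF assms] by simp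
  qed
  have YK: "xe (Suc i) \<in> K" using assms by (intro xe_K) auto
  have "cj (Suc (Suc i)) (xe i) \<otimes>\<^bsub>G\<^esub> inv\<^bsub>G\<^esub> (xe i) \<otimes>\<^bsub>G\<^esub> ng (Suc i) =
    cls n [Suc (Suc i), i, Suc i, i, Suc i, Suc (Suc i), Suc i, i, Suc i, i, i, Suc i, Suc (Suc i), Suc i, Suc (Suc i), i, Suc (Suc i), Suc i, Suc (Suc i), Suc i]"
    using assms by (simp add: ng_cls xe_def cj_cls inv_tw mult_tw)
  also have "\<dots> = cls n [i, Suc (Suc i), Suc i, i, Suc (Suc i), Suc i, Suc i, Suc (Suc i), Suc i, Suc (Suc i), Suc i, Suc (Suc i), i, Suc i, Suc (Suc i), i, Suc (Suc i), Suc i, Suc (Suc i), Suc i]"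
    by (rule R4_word[OF assms])
  also have "\<dots> = Xc \<otimes>\<^bsub>G\<^esub> xe (Suc i) \<otimes>\<^bsub>G\<^esub> inv\<^bsub>G\<^esub> Xc \<otimes>\<^bsub>G\<^esub> inv\<^bsub>G\<^esub> (xe (Suc i))"
    using assms by (simp add: Xc_def xe_def mult_tw inv_tw)
  finally show ?thesis using comm_in_K2[OF XK YK] by simp
qed

definition gen :: "nat \<Rightarrow> nat list set" where
  "gen k = (if k < m then xe (Suc k) else ng (k + 2 - m))"

definition Gs :: "nat list set set" where "Gs = gen ` {..<2 * m - 1}"

lemma xe_Gs: "1 \<le> i \<Longrightarrow> i \<le> m \<Longrightarrow> xe i \<in> Gs"
  unfolding Gs_def gen_def by (rule image_eqI[of _ _ "i - 1"]) auto

lemma ng_Gs: "1 \<le> k \<Longrightarrow> k + 1 \<le> m \<Longrightarrow> ng (Suc k) \<in> Gs"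
  unfolding Gs_def gen_def by (rule image_eqI[of _ _ "m + k - 1"]) auto

lemma gen_hi: "\<not> k < m \<Longrightarrow> gen k = ng (Suc (k + 1 - m))"
proof -
  assume h: "\<not> k < m"
  have "k + 2 - m = Suc (k + 1 - m)" using h by arith
  then show ?thesis using h unfolding gen_def by simp
qed

lemma gen_K: assumes "k < 2 * m - 1" shows "gen k \<in> K"
proof (cases "k < m")
  case True
  have "xe (Suc k) \<in> K" by (rule xe_K) (use nm True in auto)
  then show ?thesis using True unfolding gen_def by simp
next
  case False
  have "ng (Suc (k + 1 - m)) \<in> K" by (rule ng_K) (use nm assms False in auto)
  then show ?thesis using gen_hi[OF False] by simp
qed

lemma Gs_K: "Gs \<subseteq> K"
  unfolding Gs_def using gen_K by auto

lemma psi_gen: assumes "k < 2 * m - 1" shows "psiF m (gen k) = frag_of k"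
proof (cases "k < m")
  case True
  then show ?thesis unfolding gen_def using psi_xe[of "Suc k"] by simp
next
  case False
  have "psiF m (ng (Suc (k + 1 - m))) = frag_of (m + (k + 1 - m) - 1)"
    by (rule psi_ng) (use assms False in auto)
  moreover have "m + (k + 1 - m) - 1 = k" using False by arith
  ultimately show ?thesis using gen_hi[OF False] by simp
qed

lemma genK: "generate G Gs \<subseteq> K"
  by (rule group.generate_subgroup_incl[OF grp Gs_K K_sub])

lemma cj_K: "1 \<le> l \<Longrightarrow> l < n \<Longrightarrow> y \<in> K \<Longrightarrow> cj l y \<in> K"
  unfolding cj_alt by (rule conj_K[OF c_carrier])

lemma q_cj: "1 \<le> l \<Longrightarrow> l < n \<Longrightarrow> y \<in> K \<Longrightarrow> y' \<in> K \<Longrightarrow> q y = q y' \<Longrightarrow> q (cj l y) = q (cj l y')"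
  unfolding cj_alt by (rule q_conj[OF c_carrier])

lemma q_cjswap: "1 \<le> l \<Longrightarrow> l < n \<Longrightarrow> 1 \<le> l' \<Longrightarrow> l' < n \<Longrightarrow> u \<in> K \<Longrightarrow>
    q (cj l (cj l' u)) = q (cj l' (cj l u))"
  unfolding cj_alt by (rule q_swap[OF _ c_carrier c_carrier])

end


context tw
begin

lemma K_mult: "a \<in> K \<Longrightarrow> b \<in> K \<Longrightarrow> a \<otimes>\<^bsub>G\<^esub> b \<in> K"
  by (rule subgroup.m_closed[OF K_sub])

lemma K_inv: "a \<in> K \<Longrightarrow> inv\<^bsub>G\<^esub> a \<in> K"
  by (rule subgroup.m_inv_closed[OF K_sub])

lemma q_mi: "a \<in> K \<Longrightarrow> b \<in> K \<Longrightarrow> q (a \<otimes>\<^bsub>G\<^esub> inv\<^bsub>G\<^esub> b) = q a \<otimes>\<^bsub>M\<^esub> inv\<^bsub>M\<^esub> (q b)"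
proof -
  assume h: "a \<in> K" "b \<in> K"
  have "q (a \<otimes>\<^bsub>G\<^esub> inv\<^bsub>G\<^esub> b) = q a \<otimes>\<^bsub>M\<^esub> q (inv\<^bsub>G\<^esub> b)" by (rule q_mult[OF h(1) K_inv[OF h(2)]])
  then show ?thesis unfolding q_inv[OF h(2)] .
qed

lemma R4q: assumes "1 \<le> i" "i + 2 < n"
  shows "q (cj (Suc (Suc i)) (xe i)) = q (inv\<^bsub>G\<^esub> (ng (Suc i)) \<otimes>\<^bsub>G\<^esub> xe i)"
proof -
  interpret Gg: group G by (rule grp)
  have xK: "xe i \<in> K" by (rule xe_K) (use assms in auto)
  have NK: "ng (Suc i) \<in> K" by (rule ng_K) (use assms in auto)
  have cK: "cj (Suc (Suc i)) (xe i) \<in> K" by (rule cj_K[OF _ _ xK]) (use assms in auto)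
  have yK: "inv\<^bsub>G\<^esub> (ng (Suc i)) \<otimes>\<^bsub>G\<^esub> xe i \<in> K" by (rule K_mult[OF K_inv[OF NK] xK])
  have "cj (Suc (Suc i)) (xe i) \<otimes>\<^bsub>G\<^esub> inv\<^bsub>G\<^esub> (inv\<^bsub>G\<^esub> (ng (Suc i)) \<otimes>\<^bsub>G\<^esub> xe i) = cj (Suc (Suc i)) (xe i) \<otimes>\<^bsub>G\<^esub> inv\<^bsub>G\<^esub> (xe i) \<otimes>\<^bsub>G\<^esub> ng (Suc i)"
    using K_carrier[OF xK] K_carrier[OF NK] K_carrier[OF cK] by (simp add: Gg.inv_inv_mult Gg.m_assoc)
  then have "cj (Suc (Suc i)) (xe i) \<otimes>\<^bsub>G\<^esub> inv\<^bsub>G\<^esub> (inv\<^bsub>G\<^esub> (ng (Suc i)) \<otimes>\<^bsub>G\<^esub> xe i) \<in> K2" using R4[OF assms] by simp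
  then show ?thesis using q_eq[OF cK yK] by simp
qed

lemma ng_alt: "ng (Suc k) = cj k (xe (Suc k)) \<otimes>\<^bsub>G\<^esub> inv\<^bsub>G\<^esub> (xe (Suc k))"
  by (simp add: ng_def)

lemma qexp:
  assumes l: "1 \<le> l" "l < n" and k: "1 \<le> k" "k + 2 < n"
  shows "q (cj l (ng (Suc k))) = q (cj l (cj k (xe (Suc k)))) \<otimes>\<^bsub>M\<^esub> inv\<^bsub>M\<^esub> (q (cj l (xe (Suc k))))"
proof -
  interpret Gg: group G by (rule grp)
  have xK: "xe (Suc k) \<in> K" by (rule xe_K) (use k in auto)
  have kN: "k < n" using k by simp
  have ckK: "cj k (xe (Suc k)) \<in> K" by (rule cj_K[OF k(1) kN xK])
  have e: "cj l (ng (Suc k)) = cj l (cj k (xe (Suc k))) \<otimes>\<^bsub>G\<^esub> inv\<^bsub>G\<^esub> (cj l (xe (Suc k)))"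
    unfolding ng_alt using K_carrier[OF xK] K_carrier[OF ckK] l
    by (simp add: cj_mult cj_inv)
  show ?thesis unfolding e by (rule q_mi[OF cj_K[OF l ckK] cj_K[OF l xK]])
qed

lemma q_cj_ng_far:
  assumes l: "1 \<le> l" "l < n" and k: "1 \<le> k" "k + 2 < n" and far: "l + 2 \<le> Suc k \<or> Suc k + 3 \<le> l"
  shows "q (cj l (ng (Suc k))) = q (ng (Suc k))"
proof -
  have xK: "xe (Suc k) \<in> K" by (rule xe_K) (use k in auto)
  have kN: "k < n" using k by simp
  have ckK: "cj k (xe (Suc k)) \<in> K" by (rule cj_K[OF k(1) kN xK])
  have cx: "cj l (xe (Suc k)) = xe (Suc k)" by (rule cjx_far) (use l k far in auto)
  have "q (cj l (cj k (xe (Suc k)))) = q (cj k (cj l (xe (Suc k))))"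
    by (rule q_cjswap[OF l k(1) kN xK])
  then have sw: "q (cj l (cj k (xe (Suc k)))) = q (cj k (xe (Suc k)))" unfolding cx .
  have "q (cj l (ng (Suc k))) = q (cj k (xe (Suc k))) \<otimes>\<^bsub>M\<^esub> inv\<^bsub>M\<^esub> (q (xe (Suc k)))"
    using qexp[OF l k] unfolding sw cx .
  also have "\<dots> = q (ng (Suc k))" unfolding ng_alt by (rule q_mi[OF ckK xK, symmetric])
  finally show ?thesis .
qed


abbreviation "GS \<equiv> generate G Gs"

lemma exI_GS: "q a = q y \<Longrightarrow> y \<in> GS \<Longrightarrow> \<exists>y\<in>GS. q a = q y"
  by blast

lemma cj_xe:
  assumes l: "1 \<le> l" "l < n" and i: "1 \<le> i" "i \<le> m"
  shows "\<exists>y\<in>GS. q (cj l (xe i)) = q y"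
proof -
  interpret Gg: group G by (rule grp)
  have iN: "i + 1 < n" using i nm by simp
  have xK: "xe i \<in> K" by (rule xe_K[OF i(1) iN])
  have xG: "xe i \<in> carrier G" by (rule K_carrier[OF xK])
  have xGS: "xe i \<in> GS" by (rule generate.incl[OF xe_Gs[OF i]])
  consider (far) "l + 2 \<le> i \<or> i + 3 \<le> l" | (e1) "l = i" | (e2) "l = Suc i" | (lo) "Suc l = i"
    | (hi) "l = Suc (Suc i)" by arith
  then show ?thesis
  proof cases
    case far
    have e: "cj l (xe i) = xe i" by (rule cjx_far[OF l i(1) iN far])
    show ?thesis unfolding e using xGS by blast
  next
    case e1
    have e: "cj l (xe i) = inv\<^bsub>G\<^esub> (xe i)" unfolding e1 by (rule cjx_self(1)[OF i(1) iN])
    have "inv\<^bsub>G\<^esub> (xe i) \<in> GS" by (rule generate.inv[OF xe_Gs[OF i]])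
    then show ?thesis unfolding e by blast
  next
    case e2
    have e: "cj l (xe i) = inv\<^bsub>G\<^esub> (xe i)" unfolding e2 by (rule cjx_self(2)[OF i(1) iN])
    have "inv\<^bsub>G\<^esub> (xe i) \<in> GS" by (rule generate.inv[OF xe_Gs[OF i]])
    then show ?thesis unfolding e by blast
  next
    case lo
    have NGs: "ng (Suc l) \<in> Gs" by (rule ng_Gs) (use l i lo in auto)
    have NK: "ng (Suc l) \<in> K" using Gs_K NGs by blast
    have "ng (Suc l) \<otimes>\<^bsub>G\<^esub> xe (Suc l) = cj l (xe (Suc l))"
      unfolding ng_alt
      by (rule Gg.cancel_r[OF K_carrier[OF cj_K[OF l xK[unfolded lo[symmetric]]]] xG[unfolded lo[symmetric]]])
    moreover have "ng (Suc l) \<otimes>\<^bsub>G\<^esub> xe (Suc l) \<in> GS"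
      by (rule generate.eng[OF generate.incl[OF NGs] xGS[unfolded lo[symmetric]]])
    ultimately show ?thesis unfolding lo[symmetric] by (metis)
  next
    case hi
    have i2: "i + 2 < n" using l hi by simp
    have NGs: "ng (Suc i) \<in> Gs" by (rule ng_Gs) (use i i2 nm in auto)
    have "inv\<^bsub>G\<^esub> (ng (Suc i)) \<otimes>\<^bsub>G\<^esub> xe i \<in> GS"
      by (rule generate.eng[OF generate.inv[OF NGs] xGS])
    moreover have "q (cj l (xe i)) = q (inv\<^bsub>G\<^esub> (ng (Suc i)) \<otimes>\<^bsub>G\<^esub> xe i)" unfolding hi by (rule R4q[OF i(1) i2])
    ultimately show ?thesis by blast
  qed
qed


lemma cj_ng:
  assumes l: "1 \<le> l" "l < n" and k: "1 \<le> k" "k + 1 \<le> m"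
  shows "\<exists>y\<in>GS. q (cj l (ng (Suc k))) = q y"
proof -
  interpret Gg: group G by (rule grp)
  interpret Mg: comm_group M by (rule M_comm)
  have k2: "k + 2 < n" using k nm by simp
  have kN: "k < n" using k nm by simp
  have jN: "Suc k + 1 < n" using k nm by simp
  have xK: "xe (Suc k) \<in> K" by (rule xe_K) (use k nm in auto)
  have xG: "xe (Suc k) \<in> carrier G" by (rule K_carrier[OF xK])
  have ckK: "cj k (xe (Suc k)) \<in> K" by (rule cj_K[OF k(1) kN xK])
  have NK: "ng (Suc k) \<in> K" by (rule ng_K[OF k(1) k2])
  have NGs: "ng (Suc k) \<in> Gs" by (rule ng_Gs[OF k])
  have NGS: "ng (Suc k) \<in> GS" by (rule generate.incl[OF NGs])
  have iNGS: "inv\<^bsub>G\<^esub> (ng (Suc k)) \<in> GS" by (rule generate.inv[OF NGs])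
  consider (far) "l + 2 \<le> Suc k \<or> Suc k + 3 \<le> l" | (ek) "l = k" | (sf) "l = Suc k \<or> l = Suc (Suc k)"
    | (hi) "l = Suc (Suc (Suc k))" by arith
  then show ?thesis
  proof cases
    case far
    show ?thesis by (rule exI_GS[OF q_cj_ng_far[OF l k(1) k2 far] NGS])
  next
    case ek
    have "cj k (ng (Suc k)) = cj k (cj k (xe (Suc k))) \<otimes>\<^bsub>G\<^esub> cj k (inv\<^bsub>G\<^esub> (xe (Suc k)))"
      unfolding ng_alt by (rule cj_mult[OF k(1) kN K_carrier[OF ckK] Gg.inv_closed[OF xG]])
    also have "\<dots> = xe (Suc k) \<otimes>\<^bsub>G\<^esub> inv\<^bsub>G\<^esub> (cj k (xe (Suc k)))"
      by (simp only: cj_cj[OF k(1) kN xG] cj_inv[OF k(1) kN xG])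
    also have "\<dots> = inv\<^bsub>G\<^esub> (ng (Suc k))"
      unfolding ng_alt using xG K_carrier[OF ckK] by (simp add: Gg.inv_mult_group)
    finally have e: "cj k (ng (Suc k)) = inv\<^bsub>G\<^esub> (ng (Suc k))" .
    show ?thesis unfolding ek e by (rule exI_GS[OF refl iNGS])
  next
    case sf
    have lx: "cj l (xe (Suc k)) = inv\<^bsub>G\<^esub> (xe (Suc k))"
      using sf cjx_self[OF _ jN] by auto
    have "q (cj l (cj k (xe (Suc k)))) = q (cj k (cj l (xe (Suc k))))"
      by (rule q_cjswap[OF l k(1) kN xK])
    also have "\<dots> = q (inv\<^bsub>G\<^esub> (cj k (xe (Suc k))))" unfolding lx by (simp only: cj_inv[OF k(1) kN xG])
    also have "\<dots> = inv\<^bsub>M\<^esub> (q (cj k (xe (Suc k))))" by (rule q_inv[OF ckK])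
    finally have A: "q (cj l (cj k (xe (Suc k)))) = inv\<^bsub>M\<^esub> (q (cj k (xe (Suc k))))" .
    have B: "q (cj l (xe (Suc k))) = inv\<^bsub>M\<^esub> (q (xe (Suc k)))" unfolding lx by (rule q_inv[OF xK])
    have "q (cj l (ng (Suc k))) = inv\<^bsub>M\<^esub> (q (cj k (xe (Suc k)))) \<otimes>\<^bsub>M\<^esub> inv\<^bsub>M\<^esub> (inv\<^bsub>M\<^esub> (q (xe (Suc k))))"
      using qexp[OF l k(1) k2] unfolding A B .
    also have "\<dots> = inv\<^bsub>M\<^esub> (q (cj k (xe (Suc k)))) \<otimes>\<^bsub>M\<^esub> q (xe (Suc k))"
      by (simp only: Mg.inv_inv[OF q_carrier[OF xK]])
    also have "\<dots> = inv\<^bsub>M\<^esub> (q (cj k (xe (Suc k))) \<otimes>\<^bsub>M\<^esub> inv\<^bsub>M\<^esub> (q (xe (Suc k))))"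
      by (rule Mg.cg2[OF q_carrier[OF ckK] q_carrier[OF xK]])
    also have "\<dots> = inv\<^bsub>M\<^esub> (q (ng (Suc k)))" unfolding ng_alt by (simp only: q_mi[OF ckK xK])
    also have "\<dots> = q (inv\<^bsub>G\<^esub> (ng (Suc k)))" by (rule q_inv[OF NK, symmetric])
    finally show ?thesis by (rule exI_GS[OF _ iNGS])
  next
    case hi
    have k3: "Suc k + 2 < n" using l hi by simp
    have km: "Suc k + 1 \<le> m" using k3 nm by simp
    define x' where "x' = xe (Suc (Suc k))"
    define N' where "N' = ng (Suc (Suc k))"
    have N'K: "N' \<in> K" unfolding N'_def by (rule ng_K) (use k3 in auto)
    have R: "q (cj l (xe (Suc k))) = q (inv\<^bsub>G\<^esub> N' \<otimes>\<^bsub>G\<^esub> xe (Suc k))"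
      unfolding hi N'_def by (rule R4q) (use k3 in auto)
    have cN: "q (cj k N') = q N'" unfolding N'_def
      by (rule q_cj_ng_far) (use k k3 kN in auto)
    have ckN: "cj k N' \<in> K" by (rule cj_K[OF k(1) kN N'K])
    have yK: "inv\<^bsub>G\<^esub> N' \<otimes>\<^bsub>G\<^esub> xe (Suc k) \<in> K" by (rule K_mult[OF K_inv[OF N'K] xK])
    have "q (cj l (cj k (xe (Suc k)))) = q (cj k (cj l (xe (Suc k))))"
      by (rule q_cjswap[OF l k(1) kN xK])
    also have "\<dots> = q (cj k (inv\<^bsub>G\<^esub> N' \<otimes>\<^bsub>G\<^esub> xe (Suc k)))"
      by (rule q_cj[OF k(1) kN cj_K[OF l xK] yK R])
    also have "\<dots> = q (inv\<^bsub>G\<^esub> (cj k N') \<otimes>\<^bsub>G\<^esub> cj k (xe (Suc k)))"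
      by (simp only: cj_mult[OF k(1) kN Gg.inv_closed[OF K_carrier[OF N'K]] xG] cj_inv[OF k(1) kN K_carrier[OF N'K]])
    also have "\<dots> = q (inv\<^bsub>G\<^esub> (cj k N')) \<otimes>\<^bsub>M\<^esub> q (cj k (xe (Suc k)))"
      by (rule q_mult[OF K_inv[OF ckN] ckK])
    also have "\<dots> = inv\<^bsub>M\<^esub> (q N') \<otimes>\<^bsub>M\<^esub> q (cj k (xe (Suc k)))"
      by (simp only: q_inv[OF ckN] cN)
    finally have A: "q (cj l (cj k (xe (Suc k)))) = inv\<^bsub>M\<^esub> (q N') \<otimes>\<^bsub>M\<^esub> q (cj k (xe (Suc k)))" .
    have B: "q (cj l (xe (Suc k))) = inv\<^bsub>M\<^esub> (q N') \<otimes>\<^bsub>M\<^esub> q (xe (Suc k))"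
      unfolding R by (simp only: q_mult[OF K_inv[OF N'K] xK] q_inv[OF N'K])
    have "q (cj l (ng (Suc k))) = inv\<^bsub>M\<^esub> (q N') \<otimes>\<^bsub>M\<^esub> q (cj k (xe (Suc k))) \<otimes>\<^bsub>M\<^esub> inv\<^bsub>M\<^esub> (inv\<^bsub>M\<^esub> (q N') \<otimes>\<^bsub>M\<^esub> q (xe (Suc k)))"
      using qexp[OF l k(1) k2] unfolding A B .
    also have "\<dots> = q (cj k (xe (Suc k))) \<otimes>\<^bsub>M\<^esub> inv\<^bsub>M\<^esub> (q (xe (Suc k)))"
      by (rule Mg.cg3[OF q_carrier[OF N'K] q_carrier[OF ckK] q_carrier[OF xK]])
    also have "\<dots> = q (ng (Suc k))" unfolding ng_alt by (rule q_mi[OF ckK xK, symmetric])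
    finally show ?thesis by (rule exI_GS[OF _ NGS])
  qed
qed

end


context tw
begin

definition T :: "nat list set set" where "T = {y \<in> K. \<exists>z\<in>GS. q y = q z}"

lemma T_K: "y \<in> T \<Longrightarrow> y \<in> K"
  unfolding T_def by blast

lemma GS_T: "z \<in> GS \<Longrightarrow> z \<in> T"
  unfolding T_def using genK by blast

lemma T_intro: "y \<in> K \<Longrightarrow> z \<in> GS \<Longrightarrow> q y = q z \<Longrightarrow> y \<in> T"
  unfolding T_def by blast

lemma T_subgroup: "subgroup T G"
proof (rule group.subgroupI[OF grp])
  show "T \<subseteq> carrier G" using T_K K_carrier by blast
  have "\<one>\<^bsub>G\<^esub> \<in> GS" by (rule generate.one)
  then have "\<one>\<^bsub>G\<^esub> \<in> T" by (rule GS_T)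
  then show "T \<noteq> {}" by blast
next
  fix a assume a: "a \<in> T"
  then obtain z where z: "z \<in> GS" "q a = q z" and aK: "a \<in> K" unfolding T_def by blast
  have zK: "z \<in> K" using genK z(1) by blast
  have "inv\<^bsub>G\<^esub> z \<in> GS" by (rule group.generate_m_inv_closed[OF grp _ z(1)]) (use Gs_K K_carrier in blast)
  moreover have "q (inv\<^bsub>G\<^esub> a) = q (inv\<^bsub>G\<^esub> z)" by (simp only: q_inv[OF aK] q_inv[OF zK] z(2))
  ultimately show "inv\<^bsub>G\<^esub> a \<in> T" by (rule T_intro[OF K_inv[OF aK]])
next
  fix a b assume a: "a \<in> T" and b: "b \<in> T"
  then obtain z where z: "z \<in> GS" "q a = q z" and aK: "a \<in> K" unfolding T_def by blast
  obtain z' where z': "z' \<in> GS" "q b = q z'" and bK: "b \<in> K" using b unfolding T_def by blast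
  have zK: "z \<in> K" "z' \<in> K" using genK z(1) z'(1) by blast+
  have "z \<otimes>\<^bsub>G\<^esub> z' \<in> GS" by (rule generate.eng[OF z(1) z'(1)])
  moreover have "q (a \<otimes>\<^bsub>G\<^esub> b) = q (z \<otimes>\<^bsub>G\<^esub> z')" by (simp only: q_mult[OF aK bK] q_mult[OF zK] z(2) z'(2))
  ultimately show "a \<otimes>\<^bsub>G\<^esub> b \<in> T" by (rule T_intro[OF K_mult[OF aK bK]])
qed

lemma T_mult: "a \<in> T \<Longrightarrow> b \<in> T \<Longrightarrow> a \<otimes>\<^bsub>G\<^esub> b \<in> T"
  by (rule subgroup.m_closed[OF T_subgroup])

lemma T_inv: "a \<in> T \<Longrightarrow> inv\<^bsub>G\<^esub> a \<in> T"
  by (rule subgroup.m_inv_closed[OF T_subgroup])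

lemma T_one: "\<one>\<^bsub>G\<^esub> \<in> T"
  by (rule subgroup.one_closed[OF T_subgroup])

lemma cj_Gs_T: assumes l: "1 \<le> l" "l < n" and h: "h \<in> Gs" shows "cj l h \<in> T"
proof -
  obtain k where k: "k < 2 * m - 1" "h = gen k" using h unfolding Gs_def by blast
  have hK: "h \<in> K" using h Gs_K by blast
  have "\<exists>y\<in>GS. q (cj l h) = q y"
  proof (cases "k < m")
    case True
    then have "h = xe (Suc k)" using k unfolding gen_def by simp
    then show ?thesis using cj_xe[OF l, of "Suc k"] True by simp
  next
    case False
    then have "h = ng (Suc (k + 1 - m))" using k gen_hi by simp
    moreover have "\<exists>y\<in>GS. q (cj l (ng (Suc (k + 1 - m)))) = q y"
      by (rule cj_ng[OF l]) (use False k(1) in auto)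
    ultimately show ?thesis by simp
  qed
  then show ?thesis unfolding T_def using cj_K[OF l hK] by blast
qed

lemma cj_one: "1 \<le> l \<Longrightarrow> l < n \<Longrightarrow> cj l \<one>\<^bsub>G\<^esub> = \<one>\<^bsub>G\<^esub>"
  using c_c[of l] c_carrier[of l] grp by (simp add: cj_def group.is_monoid monoid.r_one)

lemma cj_GS_T: assumes l: "1 \<le> l" "l < n" and z: "z \<in> GS" shows "cj l z \<in> T"
  using z
proof (induction rule: generate.induct)
  case one
  then show ?case using cj_one[OF l] T_one by simp
next
  case (incl h)
  then show ?case by (rule cj_Gs_T[OF l])
next
  case (inv h)
  have "cj l (inv\<^bsub>G\<^esub> h) = inv\<^bsub>G\<^esub> (cj l h)" by (rule cj_inv[OF l K_carrier]) (use inv Gs_K in blast)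
  then show ?case using T_inv[OF cj_Gs_T[OF l inv]] by simp
next
  case (eng h1 h2)
  have "cj l (h1 \<otimes>\<^bsub>G\<^esub> h2) = cj l h1 \<otimes>\<^bsub>G\<^esub> cj l h2"
    by (rule cj_mult[OF l K_carrier K_carrier]) (use eng genK in blast)+
  then show ?case using T_mult[OF eng(3) eng(4)] by simp
qed

lemma cj_T: assumes l: "1 \<le> l" "l < n" and y: "y \<in> T" shows "cj l y \<in> T"
proof -
  obtain z where z: "z \<in> GS" "q y = q z" and yK: "y \<in> K" using y unfolding T_def by blast
  have zK: "z \<in> K" using genK z(1) by blast
  obtain z' where z': "z' \<in> GS" "q (cj l z) = q z'" using cj_GS_T[OF l z(1)] unfolding T_def by blast
  have "q (cj l y) = q z'" using q_cj[OF l yK zK z(2)] z'(2) by simp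
  then show ?thesis by (rule T_intro[OF cj_K[OF l yK] z'(1)])
qed

lemma conj_T_word: "w \<in> tw_words n \<Longrightarrow> y \<in> T \<Longrightarrow> cls n w \<otimes>\<^bsub>G\<^esub> y \<otimes>\<^bsub>G\<^esub> inv\<^bsub>G\<^esub> (cls n w) \<in> T"
proof (induction w)
  case Nil
  interpret Gg: group G by (rule grp)
  have yG: "y \<in> carrier G" using Nil T_K K_carrier by blast
  show ?case using Nil yG by (simp add: one_tw[symmetric])
next
  case (Cons i w)
  interpret Gg: group G by (rule grp)
  have i: "1 \<le> i" "i < n" and w: "w \<in> tw_words n" using Cons.prems by auto
  have yG: "y \<in> carrier G" using Cons T_K K_carrier by blast
  have e: "cls n (i # w) = c i \<otimes>\<^bsub>G\<^esub> cls n w" using i w by (simp add: c_def mult_tw)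
  have "cls n (i # w) \<otimes>\<^bsub>G\<^esub> y \<otimes>\<^bsub>G\<^esub> inv\<^bsub>G\<^esub> (cls n (i # w)) = c i \<otimes>\<^bsub>G\<^esub> (cls n w \<otimes>\<^bsub>G\<^esub> y \<otimes>\<^bsub>G\<^esub> inv\<^bsub>G\<^esub> (cls n w)) \<otimes>\<^bsub>G\<^esub> inv\<^bsub>G\<^esub> (c i)"
    unfolding e by (rule Gg.id3[OF c_carrier[OF i] _ yG]) (simp add: w)
  also have "\<dots> = cj i (cls n w \<otimes>\<^bsub>G\<^esub> y \<otimes>\<^bsub>G\<^esub> inv\<^bsub>G\<^esub> (cls n w))" by (rule cj_alt[OF i, symmetric])
  finally show ?case using cj_T[OF i Cons.IH[OF w Cons.prems(2)]] by simp
qed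

lemma conj_T: "g \<in> carrier G \<Longrightarrow> y \<in> T \<Longrightarrow> g \<otimes>\<^bsub>G\<^esub> y \<otimes>\<^bsub>G\<^esub> inv\<^bsub>G\<^esub> g \<in> T"
  using conj_T_word by (auto simp: carrier_tw)


lemma xe_T: "1 \<le> i \<Longrightarrow> i \<le> m \<Longrightarrow> xe i \<in> T"
  by (rule GS_T[OF generate.incl[OF xe_Gs]])

lemma comm_letters_T:
  assumes i: "1 \<le> i" "i < n" and j: "1 \<le> j" "j < n"
  shows "c i \<otimes>\<^bsub>G\<^esub> c j \<otimes>\<^bsub>G\<^esub> inv\<^bsub>G\<^esub> (c i) \<otimes>\<^bsub>G\<^esub> inv\<^bsub>G\<^esub> (c j) \<in> T"
proof -
  have e: "c i \<otimes>\<^bsub>G\<^esub> c j \<otimes>\<^bsub>G\<^esub> inv\<^bsub>G\<^esub> (c i) \<otimes>\<^bsub>G\<^esub> inv\<^bsub>G\<^esub> (c j) = cls n [i, j, i, j]"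
    using i j by (simp add: c_def mult_tw inv_tw)
  have one: "cls n [] \<in> T" using T_one by (simp add: one_tw)
  consider (eq) "i = j" | (far) "i + 1 < j \<or> j + 1 < i" | (up) "j = Suc i" | (dn) "i = Suc j" by arith
  then show ?thesis
  proof cases
    case eq
    have "cls n [i, i, i, i] = cls n [i, i]"
      using cls_cancel[where u="[]" and v="[i, i]" and i=i and n=n] i by simp
    also have "\<dots> = cls n []" using cls_cancel[where u="[]" and v="[]" and i=i and n=n] i by simp
    finally have "cls n [i, j, i, j] = cls n []" using eq by simp
    then show ?thesis unfolding e using one by simp
  next
    case far
    have "cls n [i, j, i, j] = cls n [j, i, i, j]"
      using cls_swap[where u="[]" and v="[i, j]" and i=i and j=j and n=n] i j far by simp
    also have "\<dots> = cls n [j, j]" using cls_cancel[where u="[j]" and v="[j]" and i=i and n=n] i j by simp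
    also have "\<dots> = cls n []" using cls_cancel[where u="[]" and v="[]" and i=j and n=n] j by simp
    finally show ?thesis unfolding e using one by simp
  next
    case up
    have "xe i \<in> T" by (rule xe_T) (use i j up nm in auto)
    then show ?thesis unfolding e using up unfolding xe_def by simp
  next
    case dn
    have "xe j \<in> T" by (rule xe_T) (use i j dn nm in auto)
    then have "inv\<^bsub>G\<^esub> (xe j) \<in> T" by (rule T_inv)
    moreover have "inv\<^bsub>G\<^esub> (xe j) = cls n [i, j, i, j]" using i j dn by (simp add: xe_def inv_tw)
    ultimately show ?thesis unfolding e by simp
  qed
qed

lemma comm_letter_word_T:
  assumes i: "1 \<le> i" "i < n"
  shows "v \<in> tw_words n \<Longrightarrow> c i \<otimes>\<^bsub>G\<^esub> cls n v \<otimes>\<^bsub>G\<^esub> inv\<^bsub>G\<^esub> (c i) \<otimes>\<^bsub>G\<^esub> inv\<^bsub>G\<^esub> (cls n v) \<in> T"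
proof (induction v)
  case Nil
  interpret Gg: group G by (rule grp)
  have "c i \<otimes>\<^bsub>G\<^esub> cls n [] \<otimes>\<^bsub>G\<^esub> inv\<^bsub>G\<^esub> (c i) \<otimes>\<^bsub>G\<^esub> inv\<^bsub>G\<^esub> (cls n []) = \<one>\<^bsub>G\<^esub>"
    using c_carrier[OF i] by (simp add: one_tw[symmetric])
  then show ?case using T_one by simp
next
  case (Cons j v)
  interpret Gg: group G by (rule grp)
  have j: "1 \<le> j" "j < n" and v: "v \<in> tw_words n" using Cons.prems by auto
  have e: "cls n (j # v) = c j \<otimes>\<^bsub>G\<^esub> cls n v" using j v by (simp add: c_def mult_tw)
  have vG: "cls n v \<in> carrier G" using v by simp
  show ?case unfolding e Gg.id4[OF c_carrier[OF i] c_carrier[OF j] vG]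
    by (rule T_mult[OF comm_letters_T[OF i j] conj_T[OF c_carrier[OF j] Cons.IH[OF v]]])
qed

lemma comm_word_T:
  assumes b: "b \<in> carrier G"
  shows "u \<in> tw_words n \<Longrightarrow> cls n u \<otimes>\<^bsub>G\<^esub> b \<otimes>\<^bsub>G\<^esub> inv\<^bsub>G\<^esub> (cls n u) \<otimes>\<^bsub>G\<^esub> inv\<^bsub>G\<^esub> b \<in> T"
proof (induction u)
  case Nil
  interpret Gg: group G by (rule grp)
  have "cls n [] \<otimes>\<^bsub>G\<^esub> b \<otimes>\<^bsub>G\<^esub> inv\<^bsub>G\<^esub> (cls n []) \<otimes>\<^bsub>G\<^esub> inv\<^bsub>G\<^esub> b = \<one>\<^bsub>G\<^esub>"
    using b by (simp add: one_tw[symmetric])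
  then show ?case using T_one by simp
next
  case (Cons i u)
  interpret Gg: group G by (rule grp)
  have i: "1 \<le> i" "i < n" and u: "u \<in> tw_words n" using Cons.prems by auto
  have e: "cls n (i # u) = c i \<otimes>\<^bsub>G\<^esub> cls n u" using i u by (simp add: c_def mult_tw)
  have uG: "cls n u \<in> carrier G" using u by simp
  obtain v where v: "v \<in> tw_words n" "b = cls n v" using b by (auto simp: carrier_tw)
  show ?case unfolding e Gg.id5[OF c_carrier[OF i] uG b]
    by (rule T_mult[OF conj_T[OF c_carrier[OF i] Cons.IH[OF u]] comm_letter_word_T[OF i v(1), folded v(2)]])
qed

lemma K_T: "K \<subseteq> T"
  unfolding derived_def
proof (rule group.generate_subgroup_incl[OF grp _ T_subgroup])
  show "derived_set G (carrier G) \<subseteq> T"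
  proof clarify
    fix a b assume a: "a \<in> carrier G" and b: "b \<in> carrier G"
    obtain u where u: "u \<in> tw_words n" "a = cls n u" using a by (auto simp: carrier_tw)
    show "a \<otimes>\<^bsub>G\<^esub> b \<otimes>\<^bsub>G\<^esub> inv\<^bsub>G\<^esub> a \<otimes>\<^bsub>G\<^esub> inv\<^bsub>G\<^esub> b \<in> T" unfolding u(2) by (rule comm_word_T[OF b u(1)])
  qed
qed

end


context tw
begin

lemma psi_carrier: "psiF m a \<in> carrier F"
  unfolding psiF_def using val_keys by simp

lemma K_Ev': "a \<in> K \<Longrightarrow> \<exists>w. w \<in> tw_words n \<and> evw w \<and> a = cls n w"
  using derived_Ev[of n] unfolding Ev_def by blast

lemma psi_mult: assumes "a \<in> K" "b \<in> K" shows "psiF m (a \<otimes>\<^bsub>G\<^esub> b) = psiF m a + psiF m b"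
proof -
  obtain w where w: "w \<in> tw_words n" "evw w" "a = cls n w" using K_Ev'[OF assms(1)] by blast
  obtain u where u: "u \<in> tw_words n" "evw u" "b = cls n u" using K_Ev'[OF assms(2)] by blast
  show ?thesis using w u by (simp add: mult_tw psiF_cls val_append vtx_ev)
qed

lemma psi_hom: "psiF m \<in> hom H F"
proof (rule homI)
  fix x show "psiF m x \<in> carrier F" by (rule psi_carrier)
next
  fix x y assume "x \<in> carrier H" "y \<in> carrier H"
  then show "psiF m (x \<otimes>\<^bsub>H\<^esub> y) = psiF m x \<otimes>\<^bsub>F\<^esub> psiF m y"
    by (simp add: psi_mult)
qed

lemma psi_group_hom: "group_hom H F (psiF m)"
  using psi_hom H_group by (simp add: group_hom_def group_hom_axioms_def)

lemma psi_inv: assumes "a \<in> K" shows "psiF m (inv\<^bsub>G\<^esub> a) = - psiF m a"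
proof -
  have 1: "inv\<^bsub>H\<^esub> a = inv\<^bsub>G\<^esub> a" by (rule group.m_inv_consistent[OF grp K_sub assms])
  have 2: "psiF m (inv\<^bsub>H\<^esub> a) = inv\<^bsub>F\<^esub> (psiF m a)"
    by (rule group_hom.hom_inv[OF psi_group_hom]) (simp add: assms)
  have 3: "inv\<^bsub>F\<^esub> (psiF m a) = - psiF m a"
    using psi_carrier[of a] by simp
  show ?thesis using 2 unfolding 1 3 .
qed

lemma psi_K2: assumes "x \<in> K2" shows "psiF m x = 0"
proof -
  have "derived H K \<subseteq> kernel H F (psiF m)"
    unfolding derived_def[of H K]
  proof (rule group.generate_subgroup_incl[OF H_group _ group_hom.subgroup_kernel[OF psi_group_hom]])
    show "derived_set H K \<subseteq> kernel H F (psiF m)"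
    proof clarify
      fix a b assume a: "a \<in> K" and b: "b \<in> K"
      have ia: "inv\<^bsub>H\<^esub> a = inv\<^bsub>G\<^esub> a" by (rule group.m_inv_consistent[OF grp K_sub a])
      have ib: "inv\<^bsub>H\<^esub> b = inv\<^bsub>G\<^esub> b" by (rule group.m_inv_consistent[OF grp K_sub b])
      have abK: "a \<otimes>\<^bsub>G\<^esub> b \<in> K" by (rule K_mult[OF a b])
      have abaK: "a \<otimes>\<^bsub>G\<^esub> b \<otimes>\<^bsub>G\<^esub> inv\<^bsub>G\<^esub> a \<in> K" by (rule K_mult[OF abK K_inv[OF a]])
      have allK: "a \<otimes>\<^bsub>G\<^esub> b \<otimes>\<^bsub>G\<^esub> inv\<^bsub>G\<^esub> a \<otimes>\<^bsub>G\<^esub> inv\<^bsub>G\<^esub> b \<in> K" by (rule K_mult[OF abaK K_inv[OF b]])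
      have "psiF m (a \<otimes>\<^bsub>G\<^esub> b \<otimes>\<^bsub>G\<^esub> inv\<^bsub>G\<^esub> a \<otimes>\<^bsub>G\<^esub> inv\<^bsub>G\<^esub> b) = psiF m a + psiF m b + - psiF m a + - psiF m b"
        by (simp only: psi_mult[OF abaK K_inv[OF b]] psi_mult[OF abK K_inv[OF a]] psi_mult[OF a b]
            psi_inv[OF a] psi_inv[OF b])
      also have "\<dots> = 0" by (simp add: algebra_simps)
      finally have "psiF m (a \<otimes>\<^bsub>G\<^esub> b \<otimes>\<^bsub>G\<^esub> inv\<^bsub>G\<^esub> a \<otimes>\<^bsub>G\<^esub> inv\<^bsub>G\<^esub> b) = 0" .
      then show "a \<otimes>\<^bsub>H\<^esub> b \<otimes>\<^bsub>H\<^esub> inv\<^bsub>H\<^esub> a \<otimes>\<^bsub>H\<^esub> inv\<^bsub>H\<^esub> b \<in> kernel H F (psiF m)"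
        unfolding ia ib kernel_def using allK by simp
    qed
  qed
  moreover have "derived H K = K2" by (rule group.derived_consistent[OF grp subset_refl K_sub])
  ultimately show ?thesis using assms unfolding kernel_def by auto
qed

lemma psi_one: "psiF m \<one>\<^bsub>G\<^esub> = 0"
  by (simp add: one_tw psiF_cls)

lemma one_K: "\<one>\<^bsub>G\<^esub> \<in> K"
  by (rule subgroup.one_closed[OF K_sub])

lemma kernel_sub: assumes xK: "x \<in> K" and px: "psiF m x = 0" shows "x \<in> K2"
proof -
  interpret Mg: comm_group M by (rule M_comm)
  have sub: "(\<lambda>k. q (gen k)) ` {..<2 * m - 1} \<subseteq> carrier M"
    using q_carrier gen_K by blast
  obtain phi where phi: "phi \<in> hom F M" "\<And>k. k \<in> {..<2 * m - 1} \<Longrightarrow> phi (frag_of k) = q (gen k)"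
    using Mg.free_Abelian_group_universal[OF sub] by blast
  have phig: "group_hom F M phi"
    using phi(1) M_comm by (simp add: group_hom_def group_hom_axioms_def comm_group.axioms(2))
  have phi0: "phi 0 = \<one>\<^bsub>M\<^esub>"
    using group_hom.hom_one[OF phig] by simp
  have gsK: "\<And>z. z \<in> GS \<Longrightarrow> z \<in> K" using genK by blast
  have inc: "\<And>h. h \<in> Gs \<Longrightarrow> q h = phi (psiF m h)"
  proof -
    fix h assume "h \<in> Gs"
    then obtain k where k: "k < 2 * m - 1" "h = gen k" unfolding Gs_def by blast
    show "q h = phi (psiF m h)" using k phi(2)[of k] psi_gen[OF k(1)] by simp
  qed
  have key: "\<And>z. z \<in> GS \<Longrightarrow> q z = phi (psiF m z)"
  proof -
    fix z assume "z \<in> GS"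
    then show "q z = phi (psiF m z)"
    proof (induction rule: generate.induct)
      case one
      show ?case by (simp only: q_one psi_one phi0)
    next
      case (incl h)
      then show ?case by (rule inc)
    next
      case (inv h)
      have hK: "h \<in> K" using inv Gs_K by blast
      have "q (inv\<^bsub>G\<^esub> h) = inv\<^bsub>M\<^esub> (q h)" by (rule q_inv[OF hK])
      also have "\<dots> = inv\<^bsub>M\<^esub> (phi (psiF m h))" by (simp only: inc[OF inv])
      also have "\<dots> = phi (inv\<^bsub>F\<^esub> (psiF m h))"
        by (rule group_hom.hom_inv[OF phig, symmetric]) (rule psi_carrier)
      also have "\<dots> = phi (psiF m (inv\<^bsub>G\<^esub> h))"
        using psi_carrier[of h] by (simp add: psi_inv[OF hK])
      finally show ?case .
    next
      case (eng h1 h2)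
      have K1: "h1 \<in> K" and K2': "h2 \<in> K" using eng gsK by blast+
      have "q (h1 \<otimes>\<^bsub>G\<^esub> h2) = q h1 \<otimes>\<^bsub>M\<^esub> q h2" by (rule q_mult[OF K1 K2'])
      also have "\<dots> = phi (psiF m h1) \<otimes>\<^bsub>M\<^esub> phi (psiF m h2)" by (simp only: eng.IH)
      also have "\<dots> = phi (psiF m h1 \<otimes>\<^bsub>F\<^esub> psiF m h2)"
        by (rule group_hom.hom_mult[OF phig, symmetric]) (rule psi_carrier)+
      also have "\<dots> = phi (psiF m (h1 \<otimes>\<^bsub>G\<^esub> h2))"
        by (simp add: psi_mult[OF K1 K2'])
      finally show ?case .
    qed
  qed
  have "x \<in> T" using K_T xK by blast
  then obtain z where z: "z \<in> GS" "q x = q z" unfolding T_def by blast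
  have zK: "z \<in> K" using gsK z(1) .
  have "x \<otimes>\<^bsub>G\<^esub> inv\<^bsub>G\<^esub> z \<in> K2" using q_eq[OF xK zK] z(2) by simp
  then have "psiF m (x \<otimes>\<^bsub>G\<^esub> inv\<^bsub>G\<^esub> z) = 0" by (rule psi_K2)
  then have "psiF m x + - psiF m z = 0" by (simp only: psi_mult[OF xK K_inv[OF zK]] psi_inv[OF zK])
  then have pz: "psiF m z = 0" using px by simp
  have "q x = q \<one>\<^bsub>G\<^esub>" unfolding z(2) key[OF z(1)] pz phi0 q_one ..
  then have "x \<otimes>\<^bsub>G\<^esub> inv\<^bsub>G\<^esub> \<one>\<^bsub>G\<^esub> \<in> K2" using q_eq[OF xK one_K] by simp
  then show ?thesis using K_carrier[OF xK] grp by (simp add: monoid.inv_one group.is_monoid monoid.r_one)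
qed

lemma kernel_eq: "kernel H F (psiF m) = K2"
proof
  show "kernel H F (psiF m) \<subseteq> K2"
    unfolding kernel_def using kernel_sub by auto
  show "K2 \<subseteq> kernel H F (psiF m)"
    unfolding kernel_def using psi_K2 K2_sub_K by auto
qed

lemma psi_surj: "psiF m ` carrier H = carrier F"
proof
  show "psiF m ` carrier H \<subseteq> carrier F" using psi_carrier by blast
  show "carrier F \<subseteq> psiF m ` carrier H"
  proof
    fix c assume "c \<in> carrier F"
    then have "Poly_Mapping.keys c \<subseteq> {..<2 * m - 1}" by simp
    then show "c \<in> psiF m ` carrier H"
    proof (rule free_Abelian_group_induct[where P="\<lambda>c. c \<in> psiF m ` carrier H"])
      show "0 \<in> psiF m ` carrier H" using psi_one one_K by (auto intro!: image_eqI[of _ _ "\<one>\<^bsub>G\<^esub>"])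
    next
      fix x y assume "x \<in> psiF m ` carrier H" "y \<in> psiF m ` carrier H"
      then obtain a b where ab: "a \<in> K" "b \<in> K" "x = psiF m a" "y = psiF m b" by auto
      have "psiF m (a \<otimes>\<^bsub>G\<^esub> inv\<^bsub>G\<^esub> b) = x - y"
        using ab by (simp add: psi_mult[OF ab(1) K_inv[OF ab(2)]] psi_inv[OF ab(2)])
      then show "x - y \<in> psiF m ` carrier H"
        using K_mult[OF ab(1) K_inv[OF ab(2)]] by (auto intro!: image_eqI[of _ _ "a \<otimes>\<^bsub>G\<^esub> inv\<^bsub>G\<^esub> b"])
    next
      fix k assume "k \<in> {..<2 * m - 1}"
      then have "k < 2 * m - 1" by simp
      then show "frag_of k \<in> psiF m ` carrier H"
        using psi_gen gen_K by (auto intro!: image_eqI[of _ _ "gen k"])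
    qed
  qed
qed

theorem main_iso: "H Mod K2 \<cong> F"
  using group_hom.FactGroup_iso[OF psi_group_hom psi_surj] unfolding kernel_eq .

lemma K2_ne: "K2 \<noteq> K"
proof
  assume eq: "K2 = K"
  have xK: "xe 1 \<in> K" by (rule xe_K) (use m1 nm in auto)
  have "psiF m (xe 1) = frag_of 0" using psi_xe[of 1] m1 by simp
  moreover have "psiF m (xe 1) = 0" using psi_K2 xK eq by blast
  ultimately show False by simp
qed

end

theorem corollary1p3:
  fixes m :: nat
  assumes "m \<ge> 1"
  shows "((twin_group (m + 2))\<lparr>carrier := derived (twin_group (m + 2)) (carrier (twin_group (m + 2)))\<rparr>
            Mod derived (twin_group (m + 2)) (derived (twin_group (m + 2)) (carrier (twin_group (m + 2)))))
           \<cong> free_Abelian_group {..<2 * m - 1}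
       \<and> derived (twin_group (m + 2)) (derived (twin_group (m + 2)) (carrier (twin_group (m + 2))))
           \<noteq> derived (twin_group (m + 2)) (carrier (twin_group (m + 2)))"
proof -
  interpret tw m "m + 2" by unfold_locales (use assms in auto)
  show ?thesis using main_iso K2_ne by blast
qed


end
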